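(* Let $\mathcal{M}$ be a causal MDP as described in the context, with finite state set $\mathcal{S}$ ($|\mathcal{S}|=S$), finite intervention (action) set $\mathcal{A}$, finite parent-value set $\mathcal{Z}$ ($|\mathcal{Z}|=Z$), horizon $H$, and $K$ episodes, $T=KH$. Let $\delta>0$ and run the algorithm C-UCBVI described in the context with confidence parameter $\delta$. Then with probability at least $1-\delta$, the regret satisfies $$R_K=\sum_{k=1}^K\big(V_1^*(s_{k,1})-V_1^{\pi_k}(s_{k,1})\big)=\tilde O\big(HS\sqrt{ZT}\big),$$ where $\tilde O$ hides logarithmic factors and lower-order terms that do not depend on $T$.
   Context: Causal MDP: finite state set $\mathcal{S}$, action set $\mathcal{A}$ (interventions), and a finite set $\mathcal{Z}$ of possible values of the parent variables $\mathbf{Z}$ of the reward and state variables. There are unknown transition probabilities $\mathbb{P}(s'\mid s,\mathbf{z})$ for $s,s'\in\mathcal{S},\mathbf{z}\in\mathcal{Z}$, known conditional distributions $P(\mathbf{z}\mid s,a)$ on $\mathcal{Z}$ for each $(s,a)\in\mathcal{S}\times\mathcal{A}$, and known rewards $R(s,\mathbf{z})\in[0,1]$. Thus $\mathbb{P}(s'\mid s,a)=\sum_{\mathbf{z}}\mathbb{P}(s'\mid s,\mathbf{z})P(\mathbf{z}\mid s,a)$ and $R(s,a)=\sum_{\mathbf{z}}R(s,\mathbf{z})P(\mathbf{z}\mid s,a)$. Interaction is episodic: in episode $k=1,\dots,K$ an initial state $s_{k,1}$ is chosen arbitrarily (possibly adversarially); at each step $h=1,\dots,H$ the agent observes $s_{k,h}$,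 picks $a_{k,h}$, receives reward $R(s_{k,h},a_{k,h})$, observes $\mathbf{z}_{k,h}\sim P(\cdot\mid s_{k,h},a_{k,h})$, and the next state is $s_{k,h+1}\sim\mathbb{P}(\cdot\mid s_{k,h},\mathbf{z}_{k,h})$. A (deterministic) policy is $\pi:\mathcal{S}\times[H]\to\mathcal{A}$; $V_h^\pi(s)=\mathbb{E}[\sum_{h'=h}^H R(s_{h'},\pi(s_{h'},h'))\mid s_h=s]$, $V_h^*(s)=\sup_\pi V_h^\pi(s)$; $\pi_k$ is the policy used in episode $k$. Algorithm C-UCBVI (parameter $\delta$): before episode $k$, using all tuples $(s_{j,h},a_{j,h},\mathbf{z}_{j,h},s_{j,h+1})$ from earlier episodes, let $N_k(s,\mathbf{z},y)$ be the number of tuples with state $s$, parent value $\mathbf{z}$, next state $y$, $N_k(s,\mathbf{z})=\sum_y N_k(s,\mathbf{z},y)$, and $\hat{\mathbb{P}}_k(y\mid s,\mathbf{z})=N_k(s,\mathbf{z},y)/N_k(s,\mathbf{z})$ when $N_k(s,\mathbf{z})>0$. Let $L=\log(5SHKZT/\delta)$ and $b_{k,h}(s,\mathbf{z})=7HL\sqrt{S/N_k(s,\mathbf{z})}$. Set $V_{k,H+1}\equiv0$ and for $h=H,\dots,1$: $q_{k,h}(s,\mathbf{z})=\min\{H,\,R(s,\mathbf{z})+\sum_y\hat{\mathbb{P}}_k(y\mid s,\mathbf{z})V_{k,h+1}(y)+b_{k,h}(s,\mathbf{z})\}$ if $N_k(s,\mathbf{z})>0$ and $q_{k,h}(s,\mathbf{z})=H$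 otherwise; $Q_{k,h}(s,a)=\sum_{\mathbf{z}}P(\mathbf{z}\mid s,a)q_{k,h}(s,\mathbf{z})$; $V_{k,h}(s)=\max_a Q_{k,h}(s,a)$. (In the first episode $Q_{1,h}\equiv H$.) In episode $k$ the agent plays $a_{k,h}=\arg\max_{a\in\mathcal{A}}Q_{k,h}(s_{k,h},a)$. *)

theory Defs
  imports "HOL-Probability.Probability"
begin

text \<open>States are the naturals below S, interventions (actions) the naturals
below nA, parent values the naturals below Z.  An observed tuple is
(s, a, z, s') = (state, action, parent value, next state).\<close>

type_synonym tup = "nat \<times> nat \<times> nat \<times> nat"

definition R_sa :: "nat \<Rightarrow> (nat \<Rightarrow> nat \<Rightarrow> nat pmf) \<Rightarrow> (nat \<Rightarrow> nat \<Rightarrow> real) \<Rightarrow> nat \<Rightarrow> nat \<Rightarrow> real" where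
  "R_sa Z Pz R s a = (\<Sum>z<Z. pmf (Pz s a) z * R s z)"

definition P_sa :: "nat \<Rightarrow> (nat \<Rightarrow> nat \<Rightarrow> nat pmf) \<Rightarrow> (nat \<Rightarrow> nat \<Rightarrow> nat pmf) \<Rightarrow> nat \<Rightarrow> nat \<Rightarrow> nat \<Rightarrow> real" where
  "P_sa Z P Pz s a y = (\<Sum>z<Z. pmf (P s z) y * pmf (Pz s a) z)"

text \<open>Value of a deterministic policy pol (state, step) with j steps remaining,
i.e. V_rem j = V_{H+1-j}^pol.\<close>
primrec V_rem :: "nat \<Rightarrow> nat \<Rightarrow> (nat \<Rightarrow> nat \<Rightarrow> nat pmf) \<Rightarrow> (nat \<Rightarrow> nat \<Rightarrow> nat pmf) \<Rightarrow>
    (nat \<Rightarrow> nat \<Rightarrow> real) \<Rightarrow> nat \<Rightarrow> (nat \<Rightarrow> nat \<Rightarrow> nat) \<Rightarrow> nat \<Rightarrow> nat \<Rightarrow> real" where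
  "V_rem S Z P Pz R H pol 0 = (\<lambda>s. 0)"
| "V_rem S Z P Pz R H pol (Suc j) = (\<lambda>s.
     R_sa Z Pz R s (pol s (H - j)) +
     (\<Sum>y<S. P_sa Z P Pz s (pol s (H - j)) y * V_rem S Z P Pz R H pol j y))"

definition V_pi :: "nat \<Rightarrow> nat \<Rightarrow> (nat \<Rightarrow> nat \<Rightarrow> nat pmf) \<Rightarrow> (nat \<Rightarrow> nat \<Rightarrow> nat pmf) \<Rightarrow>
    (nat \<Rightarrow> nat \<Rightarrow> real) \<Rightarrow> nat \<Rightarrow> (nat \<Rightarrow> nat \<Rightarrow> nat) \<Rightarrow> nat \<Rightarrow> nat \<Rightarrow> real" where
  "V_pi S Z P Pz R H pol h s = V_rem S Z P Pz R H pol (H + 1 - h) s"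

definition policies :: "nat \<Rightarrow> (nat \<Rightarrow> nat \<Rightarrow> nat) set" where
  "policies nA = {pol. \<forall>s h. pol s h < nA}"

definition V_star :: "nat \<Rightarrow> nat \<Rightarrow> nat \<Rightarrow> (nat \<Rightarrow> nat \<Rightarrow> nat pmf) \<Rightarrow> (nat \<Rightarrow> nat \<Rightarrow> nat pmf) \<Rightarrow>
    (nat \<Rightarrow> nat \<Rightarrow> real) \<Rightarrow> nat \<Rightarrow> nat \<Rightarrow> nat \<Rightarrow> real" where
  "V_star S nA Z P Pz R H h s = (SUP pol\<in>policies nA. V_pi S Z P Pz R H pol h s)"

definition cnt_sz :: "tup list \<Rightarrow> nat \<Rightarrow> nat \<Rightarrow> nat" where
  "cnt_sz D s z = length (filter (\<lambda>(s', a', z', y'). s' = s \<and> z' = z) D)"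

definition cnt_szy :: "tup list \<Rightarrow> nat \<Rightarrow> nat \<Rightarrow> nat \<Rightarrow> nat" where
  "cnt_szy D s z y = length (filter (\<lambda>(s', a', z', y'). s' = s \<and> z' = z \<and> y' = y) D)"

definition phat :: "tup list \<Rightarrow> nat \<Rightarrow> nat \<Rightarrow> nat \<Rightarrow> real" where
  "phat D s z y = real (cnt_szy D s z y) / real (cnt_sz D s z)"

definition conf_L :: "nat \<Rightarrow> nat \<Rightarrow> nat \<Rightarrow> nat \<Rightarrow> real \<Rightarrow> real" where
  "conf_L S Z H K \<delta> = ln (5 * real S * real H * real K * real Z * (real K * real H) / \<delta>)"

definition ucb_q :: "nat \<Rightarrow> nat \<Rightarrow> real \<Rightarrow> (nat \<Rightarrow> nat \<Rightarrow> real) \<Rightarrow> tup list \<Rightarrow> (nat \<Rightarrow> real) \<Rightarrow> nat \<Rightarrow> nat \<Rightarrow> real" where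
  "ucb_q S H L R D W s z =
     (if cnt_sz D s z = 0 then real H
      else min (real H) (R s z + (\<Sum>y<S. phat D s z y * W y)
                         + 7 * real H * L * sqrt (real S / real (cnt_sz D s z))))"

text \<open>Optimistic values with j steps remaining: ucb_V j = V_{k,H+1-j}.\<close>
primrec ucb_V :: "nat \<Rightarrow> nat \<Rightarrow> nat \<Rightarrow> (nat \<Rightarrow> nat \<Rightarrow> nat pmf) \<Rightarrow> (nat \<Rightarrow> nat \<Rightarrow> real) \<Rightarrow> nat \<Rightarrow> real \<Rightarrow>
    tup list \<Rightarrow> nat \<Rightarrow> nat \<Rightarrow> real" where
  "ucb_V S nA Z Pz R H L D 0 = (\<lambda>s. 0)"
| "ucb_V S nA Z Pz R H L D (Suc j) = (\<lambda>s.
     Max ((\<lambda>a. \<Sum>z<Z. pmf (Pz s a) z * ucb_q S H L R D (ucb_V S nA Z Pz R H L D j) s z) ` {..<nA}))"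

definition ucb_Q :: "nat \<Rightarrow> nat \<Rightarrow> nat \<Rightarrow> (nat \<Rightarrow> nat \<Rightarrow> nat pmf) \<Rightarrow> (nat \<Rightarrow> nat \<Rightarrow> real) \<Rightarrow> nat \<Rightarrow> real \<Rightarrow>
    tup list \<Rightarrow> nat \<Rightarrow> nat \<Rightarrow> nat \<Rightarrow> real" where
  "ucb_Q S nA Z Pz R H L D h s a =
     (\<Sum>z<Z. pmf (Pz s a) z * ucb_q S H L R D (ucb_V S nA Z Pz R H L D (H - h)) s z)"

text \<open>The greedy policy pi_k; sel is an (arbitrary) argmax selector over actions.\<close>
definition ucb_policy :: "((nat \<Rightarrow> real) \<Rightarrow> nat) \<Rightarrow> nat \<Rightarrow> nat \<Rightarrow> nat \<Rightarrow> (nat \<Rightarrow> nat \<Rightarrow> nat pmf) \<Rightarrow>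
    (nat \<Rightarrow> nat \<Rightarrow> real) \<Rightarrow> nat \<Rightarrow> real \<Rightarrow> tup list \<Rightarrow> nat \<Rightarrow> nat \<Rightarrow> nat" where
  "ucb_policy sel S nA Z Pz R H L D = (\<lambda>s h. sel (\<lambda>a. ucb_Q S nA Z Pz R H L D h s a))"

primrec ep_steps :: "(nat \<Rightarrow> nat \<Rightarrow> nat pmf) \<Rightarrow> (nat \<Rightarrow> nat \<Rightarrow> nat pmf) \<Rightarrow> (nat \<Rightarrow> nat \<Rightarrow> nat) \<Rightarrow>
    nat \<Rightarrow> nat \<Rightarrow> nat \<Rightarrow> tup list pmf" where
  "ep_steps P Pz pol 0 h s = return_pmf []"
| "ep_steps P Pz pol (Suc n) h s =
     bind_pmf (Pz s (pol s h)) (\<lambda>z. bind_pmf (P s z) (\<lambda>y.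
       map_pmf (\<lambda>rest. (s, pol s h, z, y) # rest) (ep_steps P Pz pol n (Suc h) y)))"

text \<open>Distribution of the full data after k episodes of C-UCBVI; the initial state of each
episode is chosen by an (adaptive, adversarial) function init of all past data.\<close>
primrec cucbvi_run :: "nat \<Rightarrow> nat \<Rightarrow> nat \<Rightarrow> (nat \<Rightarrow> nat \<Rightarrow> nat pmf) \<Rightarrow> (nat \<Rightarrow> nat \<Rightarrow> nat pmf) \<Rightarrow>
    (nat \<Rightarrow> nat \<Rightarrow> real) \<Rightarrow> nat \<Rightarrow> real \<Rightarrow> (tup list \<Rightarrow> nat) \<Rightarrow> ((nat \<Rightarrow> real) \<Rightarrow> nat) \<Rightarrow>
    nat \<Rightarrow> tup list pmf" where
  "cucbvi_run S nA Z P Pz R H L init sel 0 = return_pmf []"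
| "cucbvi_run S nA Z P Pz R H L init sel (Suc k) =
     bind_pmf (cucbvi_run S nA Z P Pz R H L init sel k) (\<lambda>D.
       map_pmf (\<lambda>E. D @ E) (ep_steps P Pz (ucb_policy sel S nA Z Pz R H L D) H 1 (init D)))"

text \<open>Regret R_K = sum_k (V_1^*(s_{k,1}) - V_1^{pi_k}(s_{k,1})) computed from the full data D
(episode k+1, k < K, is preceded by the prefix take (k*H) D).\<close>
definition regret :: "nat \<Rightarrow> nat \<Rightarrow> nat \<Rightarrow> (nat \<Rightarrow> nat \<Rightarrow> nat pmf) \<Rightarrow> (nat \<Rightarrow> nat \<Rightarrow> nat pmf) \<Rightarrow>
    (nat \<Rightarrow> nat \<Rightarrow> real) \<Rightarrow> nat \<Rightarrow> nat \<Rightarrow> real \<Rightarrow> (tup list \<Rightarrow> nat) \<Rightarrow> ((nat \<Rightarrow> real) \<Rightarrow> nat) \<Rightarrow>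
    tup list \<Rightarrow> real" where
  "regret S nA Z P Pz R H K L init sel D =
     (\<Sum>k<K. V_star S nA Z P Pz R H 1 (init (take (k * H) D))
            - V_pi S Z P Pz R H (ucb_policy sel S nA Z Pz R H L (take (k * H) D)) 1
                  (init (take (k * H) D)))"

end

theory Submission
  imports Defs
begin


lemma sum_pmf_le1: "finite A \<Longrightarrow> (\<Sum>y\<in>A. pmf p y) \<le> 1"
  by (metis measure_measure_pmf_finite measure_pmf.prob_le_1)

lemma sum_pmf_w_le:
  assumes "finite A" "\<And>y. y \<in> A \<Longrightarrow> f y \<le> c" "0 \<le> c"
  shows "(\<Sum>y\<in>A. pmf p y * f y) \<le> c"
proof -
  have "(\<Sum>y\<in>A. pmf p y * f y) \<le> (\<Sum>y\<in>A. pmf p y * c)"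
    using assms by (intro sum_mono mult_left_mono) auto
  also have "\<dots> = (\<Sum>y\<in>A. pmf p y) * c" by (simp add: sum_distrib_right)
  also have "\<dots> \<le> 1 * c" using assms sum_pmf_le1[OF assms(1), of p] by (intro mult_right_mono) auto
  finally show ?thesis by simp
qed

lemma sum_pmf_w_ge0:
  assumes "\<And>y. y \<in> A \<Longrightarrow> 0 \<le> f y"
  shows "0 \<le> (\<Sum>y\<in>A. pmf p y * f y)"
  using assms by (intro sum_nonneg mult_nonneg_nonneg) auto

definition bon :: "nat \<Rightarrow> nat \<Rightarrow> real \<Rightarrow> tup list \<Rightarrow> nat \<Rightarrow> nat \<Rightarrow> real" where
  "bon S H L D s z = 7 * real H * L * sqrt (real S / real (cnt_sz D s z))"

definition gf :: "nat \<Rightarrow> nat \<Rightarrow> nat \<Rightarrow> real \<Rightarrow> tup list \<Rightarrow> nat \<Rightarrow> nat \<Rightarrow> real" where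
  "gf S Z H L D s z = (if s < S \<and> z < Z then (if cnt_sz D s z = 0 then real H
      else min (real H) (2 * bon S H L D s z)) else 0)"

primrec Gex :: "nat \<Rightarrow> nat \<Rightarrow> (nat \<Rightarrow> nat \<Rightarrow> nat pmf) \<Rightarrow> (nat \<Rightarrow> nat \<Rightarrow> nat pmf) \<Rightarrow>
    (nat \<Rightarrow> nat \<Rightarrow> real) \<Rightarrow> (nat \<Rightarrow> nat \<Rightarrow> nat) \<Rightarrow> nat \<Rightarrow> nat \<Rightarrow> nat \<Rightarrow> real" where
  "Gex S Z P Pz g pol 0 h s = 0"
| "Gex S Z P Pz g pol (Suc n) h s = (\<Sum>z<Z. pmf (Pz s (pol s h)) z *
     (g s z + (\<Sum>y<S. pmf (P s z) y * Gex S Z P Pz g pol n (Suc h) y)))"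

locale cmdp =
  fixes S nA Z :: nat and P Pz :: "nat \<Rightarrow> nat \<Rightarrow> nat pmf" and R :: "nat \<Rightarrow> nat \<Rightarrow> real"
    and H :: nat and L :: real
  assumes S1: "1 \<le> S" and nA1: "1 \<le> nA" and Z1: "1 \<le> Z" and H1: "1 \<le> H" and L0: "0 \<le> L"
    and Psupp: "\<And>s z. s < S \<Longrightarrow> z < Z \<Longrightarrow> set_pmf (P s z) \<subseteq> {..<S}"
    and Pzsupp: "\<And>s a. s < S \<Longrightarrow> a < nA \<Longrightarrow> set_pmf (Pz s a) \<subseteq> {..<Z}"
    and R0: "\<And>s z. s < S \<Longrightarrow> z < Z \<Longrightarrow> 0 \<le> R s z"
    and R1: "\<And>s z. s < S \<Longrightarrow> z < Z \<Longrightarrow> R s z \<le> 1"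
begin

abbreviation "UV D j \<equiv> ucb_V S nA Z Pz R H L D j"
abbreviation "VR pol j \<equiv> V_rem S Z P Pz R H pol j"
abbreviation "qf D W s z \<equiv> ucb_q S H L R D W s z"

lemma VR_expand:
  "VR pol (Suc j) s = (\<Sum>z<Z. pmf (Pz s (pol s (H - j))) z *
       (R s z + (\<Sum>y<S. pmf (P s z) y * VR pol j y)))"
proof -
  define a where "a = pol s (H - j)"
  have "VR pol (Suc j) s = (\<Sum>z<Z. pmf (Pz s a) z * R s z) +
      (\<Sum>y<S. (\<Sum>z<Z. pmf (P s z) y * pmf (Pz s a) z) * VR pol j y)"
    by (simp add: a_def R_sa_def P_sa_def)
  also have "(\<Sum>y<S. (\<Sum>z<Z. pmf (P s z) y * pmf (Pz s a) z) * VR pol j y)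
     = (\<Sum>z<Z. \<Sum>y<S. pmf (Pz s a) z * (pmf (P s z) y * VR pol j y))"
    by (subst sum.swap) (simp add: sum_distrib_left sum_distrib_right mult_ac)
  finally show ?thesis
    by (simp add: a_def sum_distrib_left distrib_left sum.distrib)
qed

lemma VR_bounds: "s < S \<Longrightarrow> 0 \<le> VR pol j s \<and> VR pol j s \<le> real j"
proof (induction j arbitrary: s)
  case 0 then show ?case by simp
next
  case (Suc j)
  have inner: "0 \<le> R s z + (\<Sum>y<S. pmf (P s z) y * VR pol j y) \<and>
      R s z + (\<Sum>y<S. pmf (P s z) y * VR pol j y) \<le> 1 + real j" if "z < Z" for z
  proof -
    have "(\<Sum>y<S. pmf (P s z) y * VR pol j y) \<le> real j"
      using Suc.IH by (intro sum_pmf_w_le) auto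
    moreover have "0 \<le> (\<Sum>y<S. pmf (P s z) y * VR pol j y)"
      using Suc.IH by (intro sum_pmf_w_ge0) auto
    ultimately show ?thesis using R0[OF Suc.prems that] R1[OF Suc.prems that] by linarith
  qed
  show ?case unfolding VR_expand
    using inner by (auto intro!: sum_pmf_w_le sum_pmf_w_ge0)
qed

lemma phat_nonneg: "0 \<le> phat D s z y"
  by (simp add: phat_def)

lemma bon_nonneg: "0 \<le> bon S H L D s z"
  using L0 by (simp add: bon_def)

lemma q_bounds:
  assumes "s < S" "z < Z" "\<And>y. y < S \<Longrightarrow> 0 \<le> W y"
  shows "0 \<le> qf D W s z \<and> qf D W s z \<le> real H"
proof -
  have "0 \<le> (\<Sum>y<S. phat D s z y * W y)"
    using assms(3) by (intro sum_nonneg mult_nonneg_nonneg phat_nonneg) auto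
  moreover have "0 \<le> 7 * real H * L * sqrt (real S / real (cnt_sz D s z))" using L0 by simp
  ultimately show ?thesis using R0[OF assms(1,2)]
    by (auto simp: ucb_q_def)
qed

lemma UV_bounds: "s < S \<Longrightarrow> 0 \<le> UV D j s \<and> UV D j s \<le> real H"
proof (induction j arbitrary: s)
  case 0 then show ?case by simp
next
  case (Suc j)
  let ?f = "\<lambda>a. \<Sum>z<Z. pmf (Pz s a) z * qf D (UV D j) s z"
  have qb: "z < Z \<Longrightarrow> 0 \<le> qf D (UV D j) s z \<and> qf D (UV D j) s z \<le> real H" for z
    using Suc by (intro q_bounds) auto
  have fb: "0 \<le> ?f a \<and> ?f a \<le> real H" for a
    using qb by (auto intro!: sum_pmf_w_le sum_pmf_w_ge0)
  have "0 \<in> {..<nA}" using nA1 by simp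
  then have ne: "(?f ` {..<nA}) \<noteq> {}" by blast
  have "Max (?f ` {..<nA}) \<le> real H" using ne fb by (subst Max_le_iff) auto
  moreover have "?f 0 \<le> Max (?f ` {..<nA})" using nA1 by (intro Max_ge) auto
  ultimately show ?case using fb[of 0] by simp
qed

definition conc :: "tup list \<Rightarrow> bool" where
  "conc D \<longleftrightarrow> (\<forall>s<S. \<forall>z<Z. 0 < cnt_sz D s z \<longrightarrow> (\<forall>W. (\<forall>y<S. 0 \<le> W y \<and> W y \<le> real H) \<longrightarrow>
      \<bar>\<Sum>y<S. (phat D s z y - pmf (P s z) y) * W y\<bar> \<le> bon S H L D s z))"

lemma conc_use:
  assumes "conc D" "s < S" "z < Z" "0 < cnt_sz D s z" "\<And>y. y < S \<Longrightarrow> 0 \<le> W y \<and> W y \<le> real H"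
  shows "(\<Sum>y<S. pmf (P s z) y * W y) - bon S H L D s z \<le> (\<Sum>y<S. phat D s z y * W y)"
    and "(\<Sum>y<S. phat D s z y * W y) \<le> (\<Sum>y<S. pmf (P s z) y * W y) + bon S H L D s z"
proof -
  have "\<bar>\<Sum>y<S. (phat D s z y - pmf (P s z) y) * W y\<bar> \<le> bon S H L D s z"
    using assms unfolding conc_def by blast
  moreover have "(\<Sum>y<S. (phat D s z y - pmf (P s z) y) * W y) =
     (\<Sum>y<S. phat D s z y * W y) - (\<Sum>y<S. pmf (P s z) y * W y)"
    by (simp add: left_diff_distrib sum_subtractf)
  ultimately show "(\<Sum>y<S. pmf (P s z) y * W y) - bon S H L D s z \<le> (\<Sum>y<S. phat D s z y * W y)"
    and "(\<Sum>y<S. phat D s z y * W y) \<le> (\<Sum>y<S. pmf (P s z) y * W y) + bon S H L D s z"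
    by linarith+
qed

lemma optimism:
  assumes "conc D" "\<And>s h. pol s h < nA"
  shows "j \<le> H \<Longrightarrow> s < S \<Longrightarrow> VR pol j s \<le> UV D j s"
proof (induction j arbitrary: s)
  case 0 then show ?case by simp
next
  case (Suc j)
  define a where "a = pol s (H - j)"
  have VRb: "y < S \<Longrightarrow> 0 \<le> VR pol j y \<and> VR pol j y \<le> real H" for y
    using VR_bounds[of y pol j] Suc.prems by auto
  have key: "R s z + (\<Sum>y<S. pmf (P s z) y * VR pol j y) \<le> qf D (UV D j) s z" if z: "z < Z" for z
  proof -
    have PV: "(\<Sum>y<S. pmf (P s z) y * VR pol j y) \<le> real j"
      using VR_bounds Suc.prems by (intro sum_pmf_w_le) auto
    have le1: "R s z + (\<Sum>y<S. pmf (P s z) y * VR pol j y) \<le> real H"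
      using PV R1[OF Suc.prems(2) z] Suc.prems(1) by linarith
    show ?thesis
    proof (cases "cnt_sz D s z = 0")
      case True then show ?thesis using le1 by (simp add: ucb_q_def)
    next
      case False
      have "(\<Sum>y<S. pmf (P s z) y * VR pol j y) - bon S H L D s z \<le> (\<Sum>y<S. phat D s z y * VR pol j y)"
        using conc_use(1)[OF assms(1) Suc.prems(2) z _ VRb] False by auto
      also have "\<dots> \<le> (\<Sum>y<S. phat D s z y * UV D j y)"
        using Suc.IH Suc.prems by (intro sum_mono mult_left_mono phat_nonneg) auto
      finally show ?thesis using le1 False by (simp add: ucb_q_def bon_def)
    qed
  qed
  have "VR pol (Suc j) s \<le> (\<Sum>z<Z. pmf (Pz s a) z * qf D (UV D j) s z)"
    unfolding VR_expand a_def[symmetric] using key by (intro sum_mono mult_left_mono) auto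
  also have "\<dots> \<le> UV D (Suc j) s"
    using assms(2)[of s "H - j"] by (simp add: a_def)
  finally show ?case .
qed

lemma Max_argmax: "finite A \<Longrightarrow> x \<in> A \<Longrightarrow> (\<And>a. a \<in> A \<Longrightarrow> f a \<le> f x) \<Longrightarrow> Max (f ` A) = f x"
  by (intro Max_eqI) auto

lemma UV_policy:
  assumes sel: "\<And>f. sel f < nA \<and> (\<forall>a<nA. f a \<le> f (sel f))" and j: "j < H"
  shows "UV D (Suc j) s = (\<Sum>z<Z. pmf (Pz s (ucb_policy sel S nA Z Pz R H L D s (H - j))) z
      * qf D (UV D j) s z)"
proof -
  define f where "f = (\<lambda>a. \<Sum>z<Z. pmf (Pz s a) z * qf D (UV D j) s z)"
  have hj: "H - (H - j) = j" using j by simp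
  have pol: "ucb_policy sel S nA Z Pz R H L D s (H - j) = sel f"
    by (simp add: ucb_policy_def ucb_Q_def hj f_def)
  have "UV D (Suc j) s = Max (f ` {..<nA})" by (simp add: f_def)
  also have "\<dots> = f (sel f)" using sel[of f] by (intro Max_argmax) auto
  finally show ?thesis by (simp add: pol f_def)
qed

lemma policy_in: assumes "\<And>f. sel f < nA \<and> (\<forall>a<nA. f a \<le> f (sel f))"
  shows "ucb_policy sel S nA Z Pz R H L D s h < nA"
  using assms by (simp add: ucb_policy_def)

lemma gap:
  assumes c: "conc D" and sel: "\<And>f. sel f < nA \<and> (\<forall>a<nA. f a \<le> f (sel f))"
  defines "pol \<equiv> ucb_policy sel S nA Z Pz R H L D"
  shows "j \<le> H \<Longrightarrow> s < S \<Longrightarrow> UV D j s - VR pol j s \<le> Gex S Z P Pz (gf S Z H L D) pol j (H + 1 - j) s"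
proof (induction j arbitrary: s)
  case 0 then show ?case by simp
next
  case (Suc j)
  define a where "a = pol s (H - j)"
  have polin: "\<And>s h. pol s h < nA" unfolding pol_def using policy_in[OF sel] by blast
  have opt: "y < S \<Longrightarrow> VR pol j y \<le> UV D j y" for y
    using optimism[OF c polin] Suc.prems by auto
  have VRb: "y < S \<Longrightarrow> 0 \<le> VR pol j y \<and> VR pol j y \<le> real H" for y
    using VR_bounds[of y pol j] Suc.prems by auto
  have UVb: "y < S \<Longrightarrow> 0 \<le> UV D j y \<and> UV D j y \<le> real H" for y
    using UV_bounds by auto
  have hh: "H + 1 - Suc j = H - j" "Suc (H - j) = H + 1 - j" using Suc.prems by auto
  have key: "qf D (UV D j) s z - (R s z + (\<Sum>y<S. pmf (P s z) y * VR pol j y))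
     \<le> gf S Z H L D s z + (\<Sum>y<S. pmf (P s z) y * Gex S Z P Pz (gf S Z H L D) pol j (H + 1 - j) y)"
    if z: "z < Z" for z
  proof -
    have d: "(\<Sum>y<S. pmf (P s z) y * (UV D j y - VR pol j y)) \<le>
        (\<Sum>y<S. pmf (P s z) y * Gex S Z P Pz (gf S Z H L D) pol j (H + 1 - j) y)"
      using Suc.IH Suc.prems by (intro sum_mono mult_left_mono) auto
    have d0: "0 \<le> (\<Sum>y<S. pmf (P s z) y * (UV D j y - VR pol j y))"
      using opt by (intro sum_pmf_w_ge0) auto
    have split: "(\<Sum>y<S. pmf (P s z) y * (UV D j y - VR pol j y)) =
        (\<Sum>y<S. pmf (P s z) y * UV D j y) - (\<Sum>y<S. pmf (P s z) y * VR pol j y)"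
      by (simp add: right_diff_distrib sum_subtractf)
    have PV0: "0 \<le> (\<Sum>y<S. pmf (P s z) y * VR pol j y)"
      using VRb by (intro sum_pmf_w_ge0) auto
    have qb: "0 \<le> qf D (UV D j) s z \<and> qf D (UV D j) s z \<le> real H"
      using UVb by (intro q_bounds Suc.prems z) auto
    have R0': "0 \<le> R s z" using R0 Suc.prems z by auto
    have main: "qf D (UV D j) s z - (R s z + (\<Sum>y<S. pmf (P s z) y * VR pol j y))
       \<le> gf S Z H L D s z + (\<Sum>y<S. pmf (P s z) y * (UV D j y - VR pol j y))"
    proof (cases "cnt_sz D s z = 0")
      case True
      then show ?thesis using qb PV0 d0 R0' Suc.prems z by (simp add: gf_def)
    next
      case False
      have cu: "(\<Sum>y<S. phat D s z y * UV D j y) \<le> (\<Sum>y<S. pmf (P s z) y * UV D j y) + bon S H L D s z"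
        using conc_use(2)[OF c Suc.prems(2) z _ UVb] False by auto
      have qle: "qf D (UV D j) s z \<le> R s z + (\<Sum>y<S. phat D s z y * UV D j y) + bon S H L D s z"
        using False by (simp add: ucb_q_def bon_def)
      show ?thesis
      proof (cases "2 * bon S H L D s z \<le> real H")
        case True
        then have "gf S Z H L D s z = 2 * bon S H L D s z" using False Suc.prems z by (simp add: gf_def)
        then show ?thesis using qle cu split by linarith
      next
        case nb: False
        then have "gf S Z H L D s z = real H" using False Suc.prems z by (simp add: gf_def)
        then show ?thesis using qb PV0 d0 R0' by linarith
      qed
    qed
    show ?thesis using main d by linarith
  qed
  have "UV D (Suc j) s - VR pol (Suc j) s =
      (\<Sum>z<Z. pmf (Pz s a) z * (qf D (UV D j) s z - (R s z + (\<Sum>y<S. pmf (P s z) y * VR pol j y))))"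
    unfolding VR_expand a_def UV_policy[OF sel Suc.prems(1)[unfolded Suc_le_eq]]
    by (simp add: pol_def right_diff_distrib sum_subtractf)
  also have "\<dots> \<le> (\<Sum>z<Z. pmf (Pz s a) z * (gf S Z H L D s z +
       (\<Sum>y<S. pmf (P s z) y * Gex S Z P Pz (gf S Z H L D) pol j (H + 1 - j) y)))"
    using key by (intro sum_mono mult_left_mono) auto
  also have "\<dots> = Gex S Z P Pz (gf S Z H L D) pol (Suc j) (H + 1 - Suc j) s"
    by (simp only: hh Gex.simps a_def)
  finally show ?case .
qed

lemma episode_regret:
  assumes c: "conc D" and sel: "\<And>f. sel f < nA \<and> (\<forall>a<nA. f a \<le> f (sel f))" and s: "s < S"
  shows "V_star S nA Z P Pz R H 1 s - V_pi S Z P Pz R H (ucb_policy sel S nA Z Pz R H L D) 1 s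
     \<le> Gex S Z P Pz (gf S Z H L D) (ucb_policy sel S nA Z Pz R H L D) H 1 s"
proof -
  let ?pol = "ucb_policy sel S nA Z Pz R H L D"
  have "V_star S nA Z P Pz R H 1 s \<le> UV D H s"
    unfolding V_star_def
  proof (rule cSUP_least)
    show "policies nA \<noteq> {}" using nA1 by (auto simp: policies_def intro!: exI[of _ "\<lambda>_ _. 0"])
    fix pol assume "pol \<in> policies nA"
    then show "V_pi S Z P Pz R H pol 1 s \<le> UV D H s"
      unfolding V_pi_def using optimism[OF c, of pol H s] s by (auto simp: policies_def)
  qed
  moreover have "UV D H s - VR ?pol H s \<le> Gex S Z P Pz (gf S Z H L D) ?pol H 1 s"
    using gap[OF c sel, of H s] s by simp
  ultimately show ?thesis unfolding V_pi_def by simp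
qed

end


lemma nn_fin:
  assumes "finite A" "set_pmf M \<subseteq> A" "\<And>x. x \<in> A \<Longrightarrow> 0 \<le> f x"
  shows "(\<integral>\<^sup>+x. ennreal (f x) \<partial>measure_pmf M) = ennreal (\<Sum>x\<in>A. pmf M x * f x)"
proof -
  have "(\<integral>\<^sup>+x. ennreal (f x) \<partial>measure_pmf M) = (\<Sum>x\<in>A. ennreal (f x) * pmf M x)"
    using assms by (intro nn_integral_measure_pmf_support) auto
  also have "\<dots> = (\<Sum>x\<in>A. ennreal (pmf M x * f x))"
    using assms by (intro sum.cong refl) (simp add: ennreal_mult mult.commute)
  also have "\<dots> = ennreal (\<Sum>x\<in>A. pmf M x * f x)"
    using assms by (intro sum_ennreal) auto
  finally show ?thesis .
qed

lemma nn_const_add: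
  assumes "\<And>x. 0 \<le> f x" "0 \<le> c"
  shows "(\<integral>\<^sup>+x. ennreal (c + f x) \<partial>measure_pmf M) = ennreal c + (\<integral>\<^sup>+x. ennreal (f x) \<partial>measure_pmf M)"
proof -
  have "(\<integral>\<^sup>+x. ennreal (c + f x) \<partial>measure_pmf M) = (\<integral>\<^sup>+x. ennreal c + ennreal (f x) \<partial>measure_pmf M)"
    using assms by (intro nn_integral_cong) auto
  also have "\<dots> = (\<integral>\<^sup>+x. ennreal c \<partial>measure_pmf M) + (\<integral>\<^sup>+x. ennreal (f x) \<partial>measure_pmf M)"
    by (intro nn_integral_add) auto
  finally show ?thesis by (simp add: measure_pmf.emeasure_space_1)
qed

lemma ep_len: "E \<in> set_pmf (ep_steps P Pz pol n h s) \<Longrightarrow> length E = n"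
  by (induction n arbitrary: h s E) (auto simp: set_bind_pmf)

lemma run_len: "D \<in> set_pmf (cucbvi_run S nA Z P Pz R H L init sel k) \<Longrightarrow> length D = k * H"
  by (induction k arbitrary: D) (auto simp: set_bind_pmf dest: ep_len)

lemma ep_super:
  assumes "\<And>D s a. (\<integral>\<^sup>+z. \<integral>\<^sup>+y. \<Phi> (D @ [(s,a,z,y)]) \<partial>measure_pmf (P s z) \<partial>measure_pmf (Pz s a)) \<le> \<Phi> D"
  shows "(\<integral>\<^sup>+E. \<Phi> (D @ E) \<partial>measure_pmf (ep_steps P Pz pol n h s)) \<le> \<Phi> D"
proof (induction n arbitrary: D h s)
  case 0 then show ?case by simp
next
  case (Suc n)
  have "(\<integral>\<^sup>+E. \<Phi> (D @ E) \<partial>measure_pmf (ep_steps P Pz pol (Suc n) h s)) =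
     (\<integral>\<^sup>+z. \<integral>\<^sup>+y. \<integral>\<^sup>+E. \<Phi> ((D @ [(s, pol s h, z, y)]) @ E) \<partial>measure_pmf (ep_steps P Pz pol n (Suc h) y)
        \<partial>measure_pmf (P s z) \<partial>measure_pmf (Pz s (pol s h)))"
    by simp
  also have "\<dots> \<le> (\<integral>\<^sup>+z. \<integral>\<^sup>+y. \<Phi> (D @ [(s, pol s h, z, y)])
        \<partial>measure_pmf (P s z) \<partial>measure_pmf (Pz s (pol s h)))"
    by (intro nn_integral_mono Suc.IH)
  also have "\<dots> \<le> \<Phi> D" by (rule assms)
  finally show ?case .
qed

lemma run_super:
  assumes "\<And>k D. length D = k * H \<Longrightarrow>
    (\<integral>\<^sup>+E. \<Psi> (Suc k) (D @ E) \<partial>measure_pmf (ep_steps P Pz (ucb_policy sel S nA Z Pz R H L D) H 1 (init D)))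
      \<le> \<Psi> k D"
  shows "(\<integral>\<^sup>+D. \<Psi> k D \<partial>measure_pmf (cucbvi_run S nA Z P Pz R H L init sel k)) \<le> \<Psi> 0 []"
proof (induction k)
  case 0 then show ?case by simp
next
  case (Suc k)
  have "(\<integral>\<^sup>+D. \<Psi> (Suc k) D \<partial>measure_pmf (cucbvi_run S nA Z P Pz R H L init sel (Suc k))) =
    (\<integral>\<^sup>+D. \<integral>\<^sup>+E. \<Psi> (Suc k) (D @ E) \<partial>measure_pmf (ep_steps P Pz (ucb_policy sel S nA Z Pz R H L D) H 1 (init D))
       \<partial>measure_pmf (cucbvi_run S nA Z P Pz R H L init sel k))"
    by simp
  also have "\<dots> \<le> (\<integral>\<^sup>+D. \<Psi> k D \<partial>measure_pmf (cucbvi_run S nA Z P Pz R H L init sel k))"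
    by (intro nn_integral_mono_AE) (auto simp: AE_measure_pmf_iff intro: assms[OF run_len, simplified])
  also have "\<dots> \<le> \<Psi> 0 []" by (rule Suc.IH)
  finally show ?case .
qed

lemma pmf_markov:
  assumes "(\<integral>\<^sup>+x. \<Phi> x \<partial>measure_pmf M) \<le> 1" "0 < c"
  shows "measure_pmf.prob M {x. ennreal c \<le> \<Phi> x} \<le> 1 / c"
proof -
  have "ennreal c * emeasure (measure_pmf M) {x. ennreal c \<le> \<Phi> x} =
      (\<integral>\<^sup>+x. ennreal c * indicator {x. ennreal c \<le> \<Phi> x} x \<partial>measure_pmf M)"
    by (simp add: nn_integral_cmult_indicator)
  also have "\<dots> \<le> (\<integral>\<^sup>+x. \<Phi> x \<partial>measure_pmf M)"
    by (intro nn_integral_mono) (auto split: split_indicator)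
  also have "\<dots> \<le> 1" by fact
  finally have "ennreal (c * measure_pmf.prob M {x. ennreal c \<le> \<Phi> x}) \<le> 1"
    using assms(2) by (simp add: measure_pmf.emeasure_eq_measure ennreal_mult)
  then have "c * measure_pmf.prob M {x. ennreal c \<le> \<Phi> x} \<le> 1"
    by (simp add: ennreal_le_1)
  then show ?thesis using assms(2) by (simp add: field_simps mult.commute)
qed

context cmdp begin

lemma Gex_nonneg:
  assumes "\<And>s z. 0 \<le> g s z"
  shows "0 \<le> Gex S Z P Pz g pol n h s"
proof (induction n arbitrary: h s)
  case 0 then show ?case by simp
next
  case (Suc n)
  then show ?case using assms by (auto intro!: sum_nonneg mult_nonneg_nonneg add_nonneg_nonneg)
qed

lemma Gex_nn:
  assumes pol: "\<And>s h. pol s h < nA" and g: "\<And>s z. 0 \<le> g s z"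
  shows "s < S \<Longrightarrow> (\<integral>\<^sup>+E. ennreal (sum_list (map (\<lambda>(s,a,z,y). g s z) E)) \<partial>measure_pmf (ep_steps P Pz pol n h s))
     = ennreal (Gex S Z P Pz g pol n h s)"
proof (induction n arbitrary: h s)
  case 0 then show ?case by simp
next
  case (Suc n)
  define a where "a = pol s h"
  have a: "a < nA" using pol by (simp add: a_def)
  let ?X = "\<lambda>E. sum_list (map (\<lambda>(s,a,z,y). g s z) E)"
  have X0: "0 \<le> ?X E" for E
    by (induction E) (auto intro!: add_nonneg_nonneg g)
  have Gn: "0 \<le> Gex S Z P Pz g pol n (Suc h) y" for y using Gex_nonneg g by blast
  have inner: "(\<integral>\<^sup>+y. \<integral>\<^sup>+E. ennreal (?X ((s, a, z, y) # E)) \<partial>measure_pmf (ep_steps P Pz pol n (Suc h) y) \<partial>measure_pmf (P s z))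
      = ennreal (g s z + (\<Sum>y<S. pmf (P s z) y * Gex S Z P Pz g pol n (Suc h) y))" if z: "z < Z" for z
  proof -
    have "(\<integral>\<^sup>+y. \<integral>\<^sup>+E. ennreal (?X ((s, a, z, y) # E)) \<partial>measure_pmf (ep_steps P Pz pol n (Suc h) y) \<partial>measure_pmf (P s z))
       = (\<integral>\<^sup>+y. ennreal (g s z + Gex S Z P Pz g pol n (Suc h) y) \<partial>measure_pmf (P s z))"
    proof (intro nn_integral_cong_AE, unfold AE_measure_pmf_iff, intro ballI)
      fix y assume "y \<in> set_pmf (P s z)"
      then have y: "y < S" using Psupp[OF Suc.prems z] by auto
      have "(\<integral>\<^sup>+E. ennreal (?X ((s, a, z, y) # E)) \<partial>measure_pmf (ep_steps P Pz pol n (Suc h) y))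
         = (\<integral>\<^sup>+E. ennreal (g s z + ?X E) \<partial>measure_pmf (ep_steps P Pz pol n (Suc h) y))" by simp
      also have "\<dots> = ennreal (g s z) + ennreal (Gex S Z P Pz g pol n (Suc h) y)"
        using X0 g Suc.IH[OF y] by (subst nn_const_add) auto
      also have "\<dots> = ennreal (g s z + Gex S Z P Pz g pol n (Suc h) y)"
        using g Gn by simp
      finally show "(\<integral>\<^sup>+E. ennreal (?X ((s, a, z, y) # E)) \<partial>measure_pmf (ep_steps P Pz pol n (Suc h) y))
         = ennreal (g s z + Gex S Z P Pz g pol n (Suc h) y)" .
    qed
    also have "\<dots> = ennreal (g s z) + (\<integral>\<^sup>+y. ennreal (Gex S Z P Pz g pol n (Suc h) y) \<partial>measure_pmf (P s z))"
      using g Gn by (intro nn_const_add) auto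
    also have "\<dots> = ennreal (g s z) + ennreal (\<Sum>y<S. pmf (P s z) y * Gex S Z P Pz g pol n (Suc h) y)"
      using Psupp[OF Suc.prems z] Gn by (subst nn_fin) auto
    also have "\<dots> = ennreal (g s z + (\<Sum>y<S. pmf (P s z) y * Gex S Z P Pz g pol n (Suc h) y))"
      using g Gn by (simp add: sum_nonneg)
    finally show ?thesis .
  qed
  have "(\<integral>\<^sup>+E. ennreal (?X E) \<partial>measure_pmf (ep_steps P Pz pol (Suc n) h s)) =
    (\<integral>\<^sup>+z. \<integral>\<^sup>+y. \<integral>\<^sup>+E. ennreal (?X ((s, a, z, y) # E)) \<partial>measure_pmf (ep_steps P Pz pol n (Suc h) y)
       \<partial>measure_pmf (P s z) \<partial>measure_pmf (Pz s a))"
    by (simp add: a_def)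
  also have "\<dots> = (\<integral>\<^sup>+z. ennreal (g s z + (\<Sum>y<S. pmf (P s z) y * Gex S Z P Pz g pol n (Suc h) y)) \<partial>measure_pmf (Pz s a))"
    using Pzsupp[OF Suc.prems a] inner
    by (intro nn_integral_cong_AE) (auto simp: AE_measure_pmf_iff)
  also have "\<dots> = ennreal (Gex S Z P Pz g pol (Suc n) h s)"
    using Pzsupp[OF Suc.prems a] g Gn
    by (subst nn_fin) (auto simp: a_def intro!: add_nonneg_nonneg sum_nonneg)
  finally show ?case .
qed

end


definition cntB :: "tup list \<Rightarrow> nat \<Rightarrow> nat \<Rightarrow> nat set \<Rightarrow> nat" where
  "cntB D s z B = length (filter (\<lambda>(s', a', z', y'). s' = s \<and> z' = z \<and> y' \<in> B) D)"

definition pB :: "(nat \<Rightarrow> nat \<Rightarrow> nat pmf) \<Rightarrow> nat \<Rightarrow> nat \<Rightarrow> nat set \<Rightarrow> real" where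
  "pB P s z B = (\<Sum>y\<in>B. pmf (P s z) y)"

primrec Xa :: "nat \<Rightarrow> nat \<Rightarrow> nat set \<Rightarrow> real \<Rightarrow> nat \<Rightarrow> nat \<Rightarrow> tup list \<Rightarrow> real" where
  "Xa s z B p n c [] = 0"
| "Xa s z B p n c (t # D) = (case t of (s', a', z', y') \<Rightarrow>
     if s' = s \<and> z' = z then (if c < n then indicator B y' - p else 0) + Xa s z B p n (Suc c) D
     else Xa s z B p n c D)"

lemma cnt_sz_append: "cnt_sz (D1 @ D2) s z = cnt_sz D1 s z + cnt_sz D2 s z"
  by (simp add: cnt_sz_def)

lemma cnt_sz_le_length: "cnt_sz D s z \<le> length D"
  by (simp add: cnt_sz_def)

lemma X_app: "Xa s z B p n c (D1 @ D2) = Xa s z B p n c D1 + Xa s z B p n (c + cnt_sz D1 s z) D2"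
  by (induction D1 arbitrary: c) (auto simp: cnt_sz_def split: prod.split)

lemma X_zero: "n \<le> c \<Longrightarrow> Xa s z B p n c D = 0"
  by (induction D arbitrary: c) (auto split: prod.split)

lemma X_full: "c + cnt_sz D s z \<le> n \<Longrightarrow> Xa s z B p n c D = real (cntB D s z B) - real (cnt_sz D s z) * p"
proof (induction D arbitrary: c)
  case Nil then show ?case by (simp add: cntB_def cnt_sz_def)
next
  case (Cons t D)
  obtain s' a' z' y' where t: "t = (s', a', z', y')" by (cases t) auto
  show ?case
  proof (cases "s' = s \<and> z' = z")
    case True
    have "Suc c + cnt_sz D s z \<le> n" using Cons.prems True by (simp add: t cnt_sz_def)
    then show ?thesis using Cons.IH[of "Suc c"] True
      by (auto simp: t cntB_def cnt_sz_def indicator_def algebra_simps)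
  next
    case False
    have "c + cnt_sz D s z \<le> n" using Cons.prems False by (auto simp: t cnt_sz_def)
    then show ?thesis using Cons.IH[of c] False
      by (auto simp: t cntB_def cnt_sz_def)
  qed
qed

definition phi :: "nat \<Rightarrow> nat \<Rightarrow> nat set \<Rightarrow> real \<Rightarrow> nat \<Rightarrow> real \<Rightarrow> real \<Rightarrow> tup list \<Rightarrow> ennreal" where
  "phi s z B p n lam sg D = ennreal (exp (lam * sg * Xa s z B p n 0 D - lam\<^sup>2 / 2 * real (min (cnt_sz D s z) n)))"

lemma phi_step:
  "phi s z B p n lam sg (D @ [(s', a, z', y)]) = phi s z B p n lam sg D *
     ennreal (if s' = s \<and> z' = z \<and> cnt_sz D s z < n then exp (lam * sg * (indicator B y - p) - lam\<^sup>2 / 2) else 1)"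
proof -
  have X: "Xa s z B p n 0 (D @ [(s', a, z', y)]) = Xa s z B p n 0 D +
      (if s' = s \<and> z' = z \<and> cnt_sz D s z < n then indicator B y - p else 0)"
    by (simp add: X_app)
  have C: "cnt_sz (D @ [(s', a, z', y)]) s z = cnt_sz D s z + (if s' = s \<and> z' = z then 1 else 0)"
    by (simp add: cnt_sz_def)
  show ?thesis
  proof (cases "s' = s \<and> z' = z \<and> cnt_sz D s z < n")
    case True
    have X': "Xa s z B p n 0 (D @ [(s', a, z', y)]) = Xa s z B p n 0 D + (indicator B y - p)"
      using X True by simp
    have m: "min (cnt_sz (D @ [(s', a, z', y)]) s z) n = min (cnt_sz D s z) n + 1"
      using C True by simp
    have "lam * sg * Xa s z B p n 0 (D @ [(s', a, z', y)]) - lam\<^sup>2 / 2 * real (min (cnt_sz (D @ [(s', a, z', y)]) s z) n)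
      = (lam * sg * Xa s z B p n 0 D - lam\<^sup>2 / 2 * real (min (cnt_sz D s z) n)) +
        (lam * sg * (indicator B y - p) - lam\<^sup>2 / 2)"
      unfolding X' m by (simp add: algebra_simps)
    then show ?thesis using True by (simp add: phi_def exp_add ennreal_mult)
  next
    case False
    then have "min (cnt_sz (D @ [(s', a, z', y)]) s z) n = min (cnt_sz D s z) n"
      unfolding C by auto
    moreover have "Xa s z B p n 0 (D @ [(s', a, z', y)]) = Xa s z B p n 0 D"
      using X[unfolded if_not_P[OF False]] by simp
    ultimately show ?thesis by (simp only: phi_def if_not_P[OF False]) simp
  qed
qed

lemma hoeff_factor:
  assumes B: "finite B" and lam: "0 < lam" and sg: "sg = 1 \<or> sg = -1"
  shows "(\<integral>\<^sup>+y. ennreal (exp (lam * sg * (indicator B y - pB P s z B) - lam\<^sup>2 / 2)) \<partial>measure_pmf (P s z)) \<le> 1"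
proof -
  let ?M = "measure_pmf (P s z)"
  let ?p = "pB P s z B"
  define f where "f = (\<lambda>y. sg * (indicator B y - ?p))"
  have pm: "?p = measure ?M B" unfolding pB_def using B by (simp add: measure_measure_pmf_finite)
  have p01: "0 \<le> ?p" "?p \<le> 1" unfolding pm by auto
  have ibrv_ax: "interval_bounded_random_variable ?M f (-1) 1"
    by (intro interval_bounded_random_variable.intro interval_bounded_random_variable_axioms.intro
        measure_pmf.prob_space_axioms) (use sg p01 in \<open>auto simp: f_def indicator_def\<close>)
  interpret ibrv: interval_bounded_random_variable ?M f "-1" 1 by (rule ibrv_ax)
  have E0: "measure_pmf.expectation (P s z) f = 0"
  proof -
    have [simp]: "integrable ?M (indicator B :: nat \<Rightarrow> real)"
      by (rule measure_pmf.integrable_const_bound[where B=1]) (auto simp: indicator_def)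
    have "measure_pmf.expectation (P s z) f = sg * (measure_pmf.expectation (P s z) (indicator B) - ?p)"
      unfolding f_def
      by (subst Bochner_Integration.integral_mult_right_zero, subst Bochner_Integration.integral_diff)
         (auto simp: measure_pmf.prob_space)
    also have "measure_pmf.expectation (P s z) (indicator B) = ?p"
      unfolding pm by simp
    finally show ?thesis by simp
  qed
  have h: "(\<integral>\<^sup>+y. ennreal (exp (lam * f y)) \<partial>?M) \<le> ennreal (exp (lam\<^sup>2 * (1 - (-1))\<^sup>2 / 8))"
    using ibrv.Hoeffdings_lemma_nn_integral_0[OF lam E0] .
  have "(\<integral>\<^sup>+y. ennreal (exp (lam * sg * (indicator B y - ?p) - lam\<^sup>2 / 2)) \<partial>?M)
     = (\<integral>\<^sup>+y. ennreal (exp (lam * f y)) * ennreal (exp (- (lam\<^sup>2 / 2))) \<partial>?M)"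
  proof (intro nn_integral_cong)
    fix y
    have "exp (lam * sg * (indicator B y - ?p) - lam\<^sup>2 / 2) = exp (lam * f y) * exp (- (lam\<^sup>2 / 2))"
      by (subst exp_add[symmetric]) (simp add: f_def algebra_simps)
    then show "ennreal (exp (lam * sg * (indicator B y - ?p) - lam\<^sup>2 / 2)) = ennreal (exp (lam * f y)) * ennreal (exp (- (lam\<^sup>2 / 2)))"
      by (simp add: ennreal_mult)
  qed
  also have "\<dots> = (\<integral>\<^sup>+y. ennreal (exp (lam * f y)) \<partial>?M) * ennreal (exp (- (lam\<^sup>2 / 2)))"
    by (rule nn_integral_multc) simp
  also have "\<dots> \<le> ennreal (exp (lam\<^sup>2 * (1 - (-1))\<^sup>2 / 8)) * ennreal (exp (- (lam\<^sup>2 / 2)))"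
    by (intro mult_right_mono h) auto
  also have "\<dots> = ennreal (exp (lam\<^sup>2 * (1 - (-1))\<^sup>2 / 8) * exp (- (lam\<^sup>2 / 2)))"
    by (rule ennreal_mult[symmetric]) auto
  also have "exp (lam\<^sup>2 * (1 - (-1))\<^sup>2 / 8) * exp (- (lam\<^sup>2 / 2)) = exp (lam\<^sup>2 * (1 - (-1))\<^sup>2 / 8 + - (lam\<^sup>2 / 2))"
    by (rule exp_add[symmetric])
  also have "lam\<^sup>2 * (1 - (-1))\<^sup>2 / 8 + - (lam\<^sup>2 / 2) = 0"
    by (simp add: power2_eq_square)
  finally show ?thesis by simp
qed

lemma phi_onestep:
  assumes B: "finite B" and lam: "0 < lam" and sg: "sg = 1 \<or> sg = -1"
  shows "(\<integral>\<^sup>+z'. \<integral>\<^sup>+y. phi s z B (pB P s z B) n lam sg (D @ [(s', a, z', y)]) \<partial>measure_pmf (P s' z') \<partial>measure_pmf (Pz s' a))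
     \<le> phi s z B (pB P s z B) n lam sg D"
proof -
  have inner: "(\<integral>\<^sup>+y. phi s z B (pB P s z B) n lam sg (D @ [(s', a, z', y)]) \<partial>measure_pmf (P s' z'))
     \<le> phi s z B (pB P s z B) n lam sg D" for z'
  proof (cases "s' = s \<and> z' = z \<and> cnt_sz D s z < n")
    case True
    have "(\<integral>\<^sup>+y. phi s z B (pB P s z B) n lam sg (D @ [(s', a, z', y)]) \<partial>measure_pmf (P s' z'))
       = phi s z B (pB P s z B) n lam sg D * (\<integral>\<^sup>+y. ennreal (exp (lam * sg * (indicator B y - pB P s z B) - lam\<^sup>2 / 2)) \<partial>measure_pmf (P s z))"
      using True by (simp only: phi_step if_P) (rule nn_integral_cmult, simp)
    also have "\<dots> \<le> phi s z B (pB P s z B) n lam sg D * 1"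
      by (intro mult_left_mono hoeff_factor assms) auto
    finally show ?thesis by simp
  next
    case False
    then have "\<And>y. phi s z B (pB P s z B) n lam sg (D @ [(s', a, z', y)]) = phi s z B (pB P s z B) n lam sg D"
      by (simp only: phi_step if_not_P[OF False]) simp
    then show ?thesis
      by (simp add: measure_pmf.emeasure_space_1)
  qed
  have "(\<integral>\<^sup>+z'. \<integral>\<^sup>+y. phi s z B (pB P s z B) n lam sg (D @ [(s', a, z', y)]) \<partial>measure_pmf (P s' z') \<partial>measure_pmf (Pz s' a))
      \<le> (\<integral>\<^sup>+z'. phi s z B (pB P s z B) n lam sg D \<partial>measure_pmf (Pz s' a))"
    by (intro nn_integral_mono inner)
  also have "\<dots> = phi s z B (pB P s z B) n lam sg D"
    by (simp add: measure_pmf.emeasure_space_1)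
  finally show ?thesis .
qed

lemma phi_run:
  assumes B: "finite B" and lam: "0 < lam" and sg: "sg = 1 \<or> sg = -1"
  shows "(\<integral>\<^sup>+D. phi s z B (pB P s z B) n lam sg D \<partial>measure_pmf (cucbvi_run S nA Z P Pz R H L init sel k)) \<le> 1"
proof -
  have "(\<integral>\<^sup>+D. (\<lambda>k. phi s z B (pB P s z B) n lam sg) k D \<partial>measure_pmf (cucbvi_run S nA Z P Pz R H L init sel k))
      \<le> (\<lambda>k. phi s z B (pB P s z B) n lam sg) 0 []"
    by (rule run_super, rule ep_super, rule phi_onestep[OF assms])
  also have "\<dots> = 1" by (simp add: phi_def cnt_sz_def)
  finally show ?thesis by simp
qed

lemma sum_cnt_szy: "finite B \<Longrightarrow> (\<Sum>y\<in>B. real (cnt_szy D s z y)) = real (cntB D s z B)"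
proof (induction D)
  case Nil then show ?case by (simp add: cnt_szy_def cntB_def)
next
  case (Cons t D)
  obtain s' a' z' y' where t: "t = (s', a', z', y')" by (cases t) auto
  have "(\<Sum>y\<in>B. real (cnt_szy (t # D) s z y)) = (\<Sum>y\<in>B. (if s' = s \<and> z' = z \<and> y' = y then 1 else 0) + real (cnt_szy D s z y))"
    by (intro sum.cong refl) (auto simp: t cnt_szy_def)
  also have "\<dots> = (\<Sum>y\<in>B. (if s' = s \<and> z' = z \<and> y' = y then 1 else 0)) + real (cntB D s z B)"
    using Cons by (simp add: sum.distrib)
  also have "(\<Sum>y\<in>B. (if s' = s \<and> z' = z \<and> y' = y then 1 else 0::real)) = (if s' = s \<and> z' = z \<and> y' \<in> B then 1 else 0)"
    using Cons.prems by (cases "s' = s \<and> z' = z") (auto simp: sum.delta sum.delta')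
  also have "cntB (t # D) s z B = (if s' = s \<and> z' = z \<and> y' \<in> B then 1 else 0) + cntB D s z B"
    by (simp add: t cntB_def)
  then have "(if s' = s \<and> z' = z \<and> y' \<in> B then 1 else 0) + real (cntB D s z B) = real (cntB (t # D) s z B)"
    by simp
  finally show ?case .
qed


lemma abs_bound:
  fixes d W :: "nat \<Rightarrow> real"
  assumes A: "finite A" and h0: "0 \<le> h" and W: "\<And>y. y \<in> A \<Longrightarrow> 0 \<le> W y \<and> W y \<le> h"
    and e: "\<And>B. B \<subseteq> A \<Longrightarrow> \<bar>\<Sum>y\<in>B. d y\<bar> \<le> e"
  shows "\<bar>\<Sum>y\<in>A. d y * W y\<bar> \<le> h * e"
proof -
  have up: "(\<Sum>y\<in>A. d y * W y) \<le> h * e"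
  proof -
    have "(\<Sum>y\<in>A. d y * W y) \<le> (\<Sum>y\<in>A. (if 0 < d y then d y else 0) * h)"
    proof (intro sum_mono)
      fix y assume y: "y \<in> A"
      show "d y * W y \<le> (if 0 < d y then d y else 0) * h"
      proof (cases "0 < d y")
        case True then show ?thesis using W[OF y] by (simp add: mult_left_mono)
      next
        case False then show ?thesis using W[OF y] by (simp add: mult_nonpos_nonneg)
      qed
    qed
    also have "\<dots> = h * (\<Sum>y\<in>A. if 0 < d y then d y else 0)"
      by (simp add: sum_distrib_left mult.commute)
    also have "(\<Sum>y\<in>A. if 0 < d y then d y else 0) = (\<Sum>y\<in>{y\<in>A. 0 < d y}. d y)"
      using A by (simp add: sum.inter_filter)
    also have "h * (\<Sum>y\<in>{y\<in>A. 0 < d y}. d y) \<le> h * e"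
      using e[of "{y\<in>A. 0 < d y}"] h0 by (intro mult_left_mono) auto
    finally show ?thesis .
  qed
  have lo: "- (h * e) \<le> (\<Sum>y\<in>A. d y * W y)"
  proof -
    have "- (h * e) \<le> h * (\<Sum>y\<in>{y\<in>A. d y < 0}. d y)"
    proof -
      have "- e \<le> (\<Sum>y\<in>{y\<in>A. d y < 0}. d y)" using e[of "{y\<in>A. d y < 0}"] by auto
      then have "h * (- e) \<le> h * (\<Sum>y\<in>{y\<in>A. d y < 0}. d y)" using h0 by (intro mult_left_mono)
      then show ?thesis by simp
    qed
    also have "(\<Sum>y\<in>{y\<in>A. d y < 0}. d y) = (\<Sum>y\<in>A. if d y < 0 then d y else 0)"
      using A by (simp add: sum.inter_filter)
    also have "h * (\<Sum>y\<in>A. if d y < 0 then d y else 0) = (\<Sum>y\<in>A. (if d y < 0 then d y else 0) * h)"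
      by (simp add: sum_distrib_left mult.commute)
    also have "\<dots> \<le> (\<Sum>y\<in>A. d y * W y)"
    proof (intro sum_mono)
      fix y assume y: "y \<in> A"
      show "(if d y < 0 then d y else 0) * h \<le> d y * W y"
      proof (cases "d y < 0")
        case True then show ?thesis using W[OF y] by (simp add: mult_left_mono_neg)
      next
        case False then show ?thesis using W[OF y] by simp
      qed
    qed
    finally show ?thesis .
  qed
  show ?thesis using up lo by linarith
qed


context cmdp begin

lemma conc_from_sets:
  assumes s: "s < S" and z: "z < Z" and n: "0 < cnt_sz D s z"
   and sets: "\<And>B. B \<subseteq> {..<S} \<Longrightarrow> \<bar>real (cntB D s z B) - real (cnt_sz D s z) * pB P s z B\<bar>
       \<le> real (cnt_sz D s z) * (7 * L * sqrt (real S / real (cnt_sz D s z)))"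
   and W: "\<And>y. y < S \<Longrightarrow> 0 \<le> W y \<and> W y \<le> real H"
  shows "\<bar>\<Sum>y<S. (phat D s z y - pmf (P s z) y) * W y\<bar> \<le> bon S H L D s z"
proof -
  let ?n = "real (cnt_sz D s z)"
  let ?e = "7 * L * sqrt (real S / ?n)"
  have npos: "0 < ?n" using n by simp
  have "\<bar>\<Sum>y\<in>{..<S}. (\<lambda>y. phat D s z y - pmf (P s z) y) y * W y\<bar> \<le> real H * ?e"
  proof (rule abs_bound)
    show "finite {..<S}" by simp
    show "0 \<le> real H" by simp
    show "\<And>y. y \<in> {..<S} \<Longrightarrow> 0 \<le> W y \<and> W y \<le> real H" using W by auto
    fix B assume B: "B \<subseteq> {..<S}"
    have fB: "finite B" using B finite_subset by blast
    have "(\<Sum>y\<in>B. phat D s z y - pmf (P s z) y) = (\<Sum>y\<in>B. real (cnt_szy D s z y)) / ?n - pB P s z B"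
      by (simp add: sum_subtractf phat_def sum_divide_distrib pB_def)
    also have "\<dots> = (real (cntB D s z B) - ?n * pB P s z B) / ?n"
      using npos by (simp add: sum_cnt_szy[OF fB] field_simps)
    finally have eq: "(\<Sum>y\<in>B. phat D s z y - pmf (P s z) y) = (real (cntB D s z B) - ?n * pB P s z B) / ?n" .
    have "\<bar>(real (cntB D s z B) - ?n * pB P s z B) / ?n\<bar> \<le> ?e"
      using sets[OF B] npos by (simp add: abs_divide divide_le_eq mult.commute)
    then show "\<bar>\<Sum>y\<in>B. phat D s z y - pmf (P s z) y\<bar> \<le> ?e" unfolding eq .
  qed
  then show ?thesis by (simp add: bon_def mult_ac)
qed

lemma conc_fail:
  assumes "\<not> conc D"
  shows "\<exists>s<S. \<exists>z<Z. 0 < cnt_sz D s z \<and> (\<exists>B. B \<subseteq> {..<S} \<and>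
     \<bar>real (cntB D s z B) - real (cnt_sz D s z) * pB P s z B\<bar>
       > real (cnt_sz D s z) * (7 * L * sqrt (real S / real (cnt_sz D s z))))"
proof (rule ccontr)
  assume nt: "\<not> ?thesis"
  have "conc D" unfolding conc_def
  proof (intro allI impI)
    fix s z W assume s: "s < S" and z: "z < Z" and n: "0 < cnt_sz D s z"
      and W: "\<forall>y<S. 0 \<le> W y \<and> W y \<le> real H"
    show "\<bar>\<Sum>y<S. (phat D s z y - pmf (P s z) y) * W y\<bar> \<le> bon S H L D s z"
    proof (rule conc_from_sets[OF s z n])
      fix B assume B: "B \<subseteq> {..<S}"
      from nt s z n have "\<not> (\<bar>real (cntB D s z B) - real (cnt_sz D s z) * pB P s z B\<bar>
       > real (cnt_sz D s z) * (7 * L * sqrt (real S / real (cnt_sz D s z))))"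
        using B by blast
      then show "\<bar>real (cntB D s z B) - real (cnt_sz D s z) * pB P s z B\<bar>
       \<le> real (cnt_sz D s z) * (7 * L * sqrt (real S / real (cnt_sz D s z)))" by simp
    next
      fix y assume "y < S" then show "0 \<le> W y \<and> W y \<le> real H" using W by blast
    qed
  qed
  then show False using assms by simp
qed

end

locale cmdp_run = cmdp +
  fixes K :: nat and \<delta> :: real
  assumes K1: "1 \<le> K" and d0: "0 < \<delta>" and d1: "\<delta> < 1" and Ldef: "L = conf_L S Z H K \<delta>"
begin

definition eps :: "nat \<Rightarrow> real" where "eps n = 7 * L * sqrt (real S / real n)"

definition sg :: "bool \<Rightarrow> real" where "sg b = (if b then 1 else -1)"

definition badE :: "nat \<times> nat \<times> nat set \<times> nat \<times> bool \<Rightarrow> tup list set" where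
  "badE i = (case i of (s, z, B, n, b) \<Rightarrow> {D. \<exists>k<K. cnt_sz (take (k * H) D) s z = n \<and>
     sg b * (real (cntB (take (k * H) D) s z B) - real n * pB P s z B) > real n * eps n})"

definition Iset :: "(nat \<times> nat \<times> nat set \<times> nat \<times> bool) set" where
  "Iset = {..<S} \<times> {..<Z} \<times> Pow {..<S} \<times> {1..K * H} \<times> UNIV"

lemma L_ge1: "1 \<le> L"
proof -
  have n1: "(1::nat) \<le> S * H * K * Z * (K * H)" using S1 H1 K1 Z1 by simp
  then have "(1::real) \<le> real (S * H * K * Z * (K * H))" using of_nat_mono[OF n1] by simp
  then have "5 \<le> 5 * real S * real H * real K * real Z * (real K * real H)"
    by (simp add: mult_ac)
  also have "\<dots> \<le> 5 * real S * real H * real K * real Z * (real K * real H) / \<delta>"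
  proof -
    let ?x = "5 * real S * real H * real K * real Z * (real K * real H)"
    have "?x * \<delta> \<le> ?x * 1" using d1 \<open>5 \<le> ?x\<close> by (intro mult_left_mono) auto
    then show ?thesis using d0 by (simp add: le_divide_eq)
  qed
  finally have X: "5 \<le> 5 * real S * real H * real K * real Z * (real K * real H) / \<delta>" .
  have "(1::real) = ln (exp 1)" by simp
  also have "\<dots> \<le> ln 5" using exp_le by (subst ln_le_cancel_iff) auto
  also have "\<dots> \<le> L" unfolding Ldef conf_L_def using X by (subst ln_le_cancel_iff) auto
  finally show ?thesis .
qed

lemma good_or_bad:
  assumes "k < K" "\<not> conc (take (k * H) D)"
  shows "D \<in> (\<Union>i\<in>Iset. badE i)"
proof -
  let ?D = "take (k * H) D"
  obtain s z B where s: "s < S" and z: "z < Z" and n: "0 < cnt_sz ?D s z" and B: "B \<subseteq> {..<S}"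
    and viol: "\<bar>real (cntB ?D s z B) - real (cnt_sz ?D s z) * pB P s z B\<bar>
       > real (cnt_sz ?D s z) * (7 * L * sqrt (real S / real (cnt_sz ?D s z)))"
    using conc_fail[OF assms(2)] by blast
  define n where "n = cnt_sz ?D s z"
  have nle: "n \<le> K * H"
  proof -
    have "n \<le> length ?D" unfolding n_def by (rule cnt_sz_le_length)
    also have "\<dots> \<le> k * H" by simp
    also have "\<dots> \<le> K * H" using assms(1) by simp
    finally show ?thesis .
  qed
  define b where "b = (real (cntB ?D s z B) - real n * pB P s z B \<ge> 0)"
  have "sg b * (real (cntB ?D s z B) - real n * pB P s z B) > real n * eps n"
    using viol unfolding n_def[symmetric] eps_def sg_def b_def by (auto split: if_splits)
  then have "D \<in> badE (s, z, B, n, b)"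
    unfolding badE_def using assms(1) n_def by auto
  moreover have "(s, z, B, n, b) \<in> Iset"
    unfolding Iset_def using s z B n nle n_def by auto
  ultimately show ?thesis by blast
qed

lemma badE_phi:
  assumes n: "0 < n" and D: "D \<in> badE (s, z, B, n, b)"
  shows "ennreal (exp (real n * (eps n)\<^sup>2 / 2)) \<le> phi s z B (pB P s z B) n (eps n) (sg b) D"
proof -
  obtain k where k: "k < K" and cn: "cnt_sz (take (k * H) D) s z = n"
    and v: "sg b * (real (cntB (take (k * H) D) s z B) - real n * pB P s z B) > real n * eps n"
    using D unfolding badE_def by auto
  define D1 where "D1 = take (k * H) D"
  define D2 where "D2 = drop (k * H) D"
  have DD: "D = D1 @ D2" by (simp add: D1_def D2_def)
  have X: "Xa s z B (pB P s z B) n 0 D = real (cntB D1 s z B) - real n * pB P s z B"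
    unfolding DD X_app using cn X_zero[of n "0 + cnt_sz D1 s z"] X_full[of 0 D1 s z n B]
    by (simp add: D1_def)
  have m: "min (cnt_sz D s z) n = n"
    unfolding DD cnt_sz_append using cn by (simp add: D1_def)
  have epos: "0 < eps n" unfolding eps_def using L_ge1 S1 n by simp
  have "real n * (eps n)\<^sup>2 / 2 = eps n * (real n * eps n) - (eps n)\<^sup>2 / 2 * real n"
    by (simp add: power2_eq_square algebra_simps)
  also have "\<dots> \<le> eps n * (sg b * (real (cntB D1 s z B) - real n * pB P s z B)) - (eps n)\<^sup>2 / 2 * real n"
    using v epos unfolding D1_def by (intro diff_right_mono mult_left_mono) auto
  also have "\<dots> = eps n * sg b * Xa s z B (pB P s z B) n 0 D - (eps n)\<^sup>2 / 2 * real (min (cnt_sz D s z) n)"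
    unfolding X m by (simp add: mult.assoc)
  finally show ?thesis unfolding phi_def by simp
qed

lemma prob_badE:
  assumes n: "0 < n" and B: "B \<subseteq> {..<S}"
  shows "measure_pmf.prob (cucbvi_run S nA Z P Pz R H L init sel K) (badE (s, z, B, n, b))
      \<le> exp (- (49 * L\<^sup>2 * real S / 2))"
proof -
  let ?M = "cucbvi_run S nA Z P Pz R H L init sel K"
  have fB: "finite B" using B finite_subset by blast
  have epos: "0 < eps n" unfolding eps_def using L_ge1 S1 n by simp
  have sgv: "sg b = 1 \<or> sg b = -1" by (simp add: sg_def)
  have ne: "real n * (eps n)\<^sup>2 = 49 * L\<^sup>2 * real S"
    using n by (simp add: eps_def power2_eq_square power_mult_distrib real_sqrt_mult[symmetric])
  have "measure_pmf.prob ?M (badE (s, z, B, n, b)) \<le>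
     measure_pmf.prob ?M {D. ennreal (exp (real n * (eps n)\<^sup>2 / 2)) \<le> phi s z B (pB P s z B) n (eps n) (sg b) D}"
    using badE_phi[OF n] by (intro measure_pmf.finite_measure_mono) auto
  also have "\<dots> \<le> 1 / exp (real n * (eps n)\<^sup>2 / 2)"
    by (intro pmf_markov phi_run fB epos sgv) simp
  also have "\<dots> = exp (- (49 * L\<^sup>2 * real S / 2))"
    using ne by (simp add: exp_minus field_simps)
  finally show ?thesis .
qed

lemma card_Iset: "card Iset = S * Z * 2 ^ S * (K * H) * 2"
  by (simp add: Iset_def card_cartesian_product card_Pow)

lemma final_ineq: "real (card Iset) * exp (- (49 * L\<^sup>2 * real S / 2)) \<le> \<delta> / 2"
proof -
  define Y where "Y = 4 * real S * real Z * (real K * real H) / \<delta>"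
  have Ypos: "0 < Y" unfolding Y_def using S1 Z1 K1 H1 d0 by simp
  have lnY: "ln Y \<le> L"
  proof -
    have "4 * real S * real Z * (real K * real H) \<le> 5 * real S * real H * real K * real Z * (real K * real H)"
    proof -
      have "(1::nat) \<le> H * K" using H1 K1 by simp
      then have "(1::real) \<le> real (H * K)" using of_nat_mono[of 1 "H * K"] by simp
      then have "1 \<le> real H * real K" by simp
      then have "4 * (real S * real Z * (real K * real H)) \<le> 5 * (real H * real K) * (real S * real Z * (real K * real H))"
        by (intro mult_right_mono) (auto)
      then show ?thesis by (simp add: mult_ac)
    qed
    then have "Y \<le> 5 * real S * real H * real K * real Z * (real K * real H) / \<delta>"
      unfolding Y_def using d0 by (intro divide_right_mono) auto
    then show ?thesis unfolding Ldef conf_L_def using Ypos by (subst ln_le_cancel_iff) auto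
  qed
  have ln2: "ln (2::real) \<le> 1" using ln_le_minus_one[of 2] by simp
  have "ln (Y * 2 ^ S) = ln Y + real S * ln 2"
    using Ypos by (simp add: ln_mult ln_realpow)
  also have "\<dots> \<le> L + real S"
  proof -
    have "real S * ln 2 \<le> real S * 1" using ln2 by (intro mult_left_mono) auto
    then show ?thesis using lnY by simp
  qed
  also have "\<dots> \<le> 49 * L\<^sup>2 * real S / 2"
  proof -
    have "L \<le> L\<^sup>2" using L_ge1 by (simp add: power2_eq_square)
    moreover have "L\<^sup>2 * 1 \<le> L\<^sup>2 * real S" using S1 by (intro mult_left_mono) auto
    ultimately have "L \<le> L\<^sup>2 * real S" by simp
    moreover have "1 * real S \<le> L\<^sup>2 * real S"
      using L_ge1 \<open>L \<le> L\<^sup>2\<close> by (intro mult_right_mono) auto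
    ultimately show ?thesis by linarith
  qed
  finally have "ln (Y * 2 ^ S) \<le> 49 * L\<^sup>2 * real S / 2" .
  then have "Y * 2 ^ S \<le> exp (49 * L\<^sup>2 * real S / 2)"
  proof -
    have "0 < Y * 2 ^ S" using Ypos by simp
    then have "Y * 2 ^ S = exp (ln (Y * 2 ^ S))" by simp
    also have "\<dots> \<le> exp (49 * L\<^sup>2 * real S / 2)" using \<open>ln (Y * 2 ^ S) \<le> _\<close> by simp
    finally show ?thesis .
  qed
  then have "Y * 2 ^ S * exp (- (49 * L\<^sup>2 * real S / 2)) \<le> 1"
    by (simp add: exp_minus field_simps)
  moreover have "real (card Iset) = \<delta> / 2 * (Y * 2 ^ S)"
    unfolding card_Iset Y_def using d0 by (simp add: field_simps)
  ultimately have "real (card Iset) * exp (- (49 * L\<^sup>2 * real S / 2)) \<le> \<delta> / 2 * 1"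
  proof -
    have "real (card Iset) * exp (- (49 * L\<^sup>2 * real S / 2)) = \<delta> / 2 * (Y * 2 ^ S * exp (- (49 * L\<^sup>2 * real S / 2)))"
      using \<open>real (card Iset) = \<delta> / 2 * (Y * 2 ^ S)\<close> by simp
    also have "\<dots> \<le> \<delta> / 2 * 1" using d0 \<open>Y * 2 ^ S * exp _ \<le> 1\<close> by (intro mult_left_mono) auto
    finally show ?thesis .
  qed
  then show ?thesis by simp
qed

lemma prob_notgood:
  "measure_pmf.prob (cucbvi_run S nA Z P Pz R H L init sel K) {D. \<exists>k<K. \<not> conc (take (k * H) D)} \<le> \<delta> / 2"
proof -
  let ?M = "cucbvi_run S nA Z P Pz R H L init sel K"
  have fin: "finite Iset" unfolding Iset_def by simp
  have "measure_pmf.prob ?M {D. \<exists>k<K. \<not> conc (take (k * H) D)} \<le> measure_pmf.prob ?M (\<Union>i\<in>Iset. badE i)"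
    using good_or_bad by (intro measure_pmf.finite_measure_mono) auto
  also have "\<dots> \<le> (\<Sum>i\<in>Iset. measure_pmf.prob ?M (badE i))"
    using fin by (intro measure_pmf.finite_measure_subadditive_finite) auto
  also have "\<dots> \<le> (\<Sum>i\<in>Iset. exp (- (49 * L\<^sup>2 * real S / 2)))"
  proof (intro sum_mono)
    fix i assume "i \<in> Iset"
    then obtain s z B n b where i: "i = (s, z, B, n, b)" "B \<subseteq> {..<S}" "0 < n"
      unfolding Iset_def by auto
    show "measure_pmf.prob ?M (badE i) \<le> exp (- (49 * L\<^sup>2 * real S / 2))"
      unfolding i(1) by (rule prob_badE[OF i(3) i(2)])
  qed
  also have "\<dots> = real (card Iset) * exp (- (49 * L\<^sup>2 * real S / 2))" by simp
  also have "\<dots> \<le> \<delta> / 2" by (rule final_ineq)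
  finally show ?thesis .
qed

end


lemma sqrt_incr_bound:
  assumes N: "0 < N" and m: "m \<le> N"
  shows "real m / sqrt (real N) \<le> 3 * (sqrt (real N + real m) - sqrt (real N))"
proof -
  define a where "a = sqrt (real N)"
  define b where "b = sqrt (real N + real m)"
  have a0: "0 < a" using N by (simp add: a_def)
  have ab: "a \<le> b" by (simp add: a_def b_def)
  have b2a: "b \<le> 2 * a"
  proof -
    have "real N + real m \<le> 4 * real N" using m by simp
    then have "sqrt (real N + real m) \<le> sqrt (4 * real N)" by (rule real_sqrt_le_mono)
    also have "sqrt (4 * real N) = 2 * sqrt (real N)" by (simp add: real_sqrt_mult)
    finally show ?thesis by (simp add: a_def b_def)
  qed
  have mab: "real m = (b - a) * (b + a)"
    by (simp add: a_def b_def algebra_simps)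
  also have "\<dots> \<le> (b - a) * (3 * a)" using ab b2a by (intro mult_left_mono) auto
  finally have "real m \<le> 3 * (b - a) * a" by (simp add: mult_ac)
  then show ?thesis using a0 by (simp add: divide_le_eq a_def[symmetric] b_def[symmetric] mult_ac)
qed

lemma seq_bound:
  fixes n :: "nat \<Rightarrow> nat" and H :: nat and cg :: real
  assumes nH: "\<And>k. n k \<le> H" and cg: "0 \<le> cg"
  defines "gs \<equiv> \<lambda>N::nat. (if N = 0 then real H else min (real H) (cg / sqrt (real N)))"
  shows "(\<Sum>k<K. real (n k) * gs (\<Sum>i<k. n i)) \<le>
     real H * real (min (\<Sum>i<K. n i) (2 * H)) + 3 * cg * sqrt (real (\<Sum>i<K. n i))"
proof (induction K)
  case 0 then show ?case by simp
next
  case (Suc K)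
  define N where "N = (\<Sum>i<K. n i)"
  define m where "m = n K"
  have mH: "m \<le> H" using nH by (simp add: m_def)
  have gsH: "gs N \<le> real H" by (simp add: gs_def)
  have step: "real m * gs N + (real H * real (min N (2 * H)) + 3 * cg * sqrt (real N))
     \<le> real H * real (min (N + m) (2 * H)) + 3 * cg * sqrt (real (N + m))"
  proof (cases "N < H")
    case True
    have a: "real m * gs N \<le> real m * real H" using gsH by (intro mult_left_mono) auto
    have mm: "min (N + m) (2 * H) = N + m" "min N (2 * H) = N" using True mH by auto
    have e1: "real H * real (min (N + m) (2 * H)) = real H * real N + real m * real H"
      unfolding mm by (simp add: algebra_simps)
    have e2: "real H * real (min N (2 * H)) = real H * real N" unfolding mm by simp
    have s3: "3 * cg * sqrt (real N) \<le> 3 * cg * sqrt (real (N + m))" using cg by (intro mult_left_mono) auto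
    show ?thesis unfolding e1 e2 using a s3 by linarith
  next
    case False
    show ?thesis
    proof (cases "N = 0")
      case True
      then have "H = 0" using False by simp
      then have "m = 0" using mH by simp
      then show ?thesis by simp
    next
      case N0: False
      have "gs N \<le> cg / sqrt (real N)" using N0 by (simp add: gs_def)
      then have "real m * gs N \<le> real m * (cg / sqrt (real N))" by (intro mult_left_mono) auto
      also have "\<dots> = cg * (real m / sqrt (real N))" by simp
      also have "\<dots> \<le> cg * (3 * (sqrt (real N + real m) - sqrt (real N)))"
        using sqrt_incr_bound[of N m] N0 mH False cg by (intro mult_left_mono) auto
      finally have a: "real m * gs N \<le> 3 * cg * sqrt (real (N + m)) - 3 * cg * sqrt (real N)"
        by (simp add: algebra_simps)
      have "real (min N (2 * H)) \<le> real (min (N + m) (2 * H))" by simp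
      then have "real H * real (min N (2 * H)) \<le> real H * real (min (N + m) (2 * H))"
        by (intro mult_left_mono) auto
      then show ?thesis using a by linarith
    qed
  qed
  have "(\<Sum>k<Suc K. real (n k) * gs (\<Sum>i<k. n i)) = (\<Sum>k<K. real (n k) * gs (\<Sum>i<k. n i)) + real m * gs N"
    by (simp add: m_def N_def)
  also have "\<dots> \<le> real H * real (min N (2 * H)) + 3 * cg * sqrt (real N) + real m * gs N"
    using Suc.IH by (simp add: N_def)
  also have "\<dots> \<le> real H * real (min (N + m) (2 * H)) + 3 * cg * sqrt (real (N + m))"
    using step by simp
  finally show ?case by (simp add: N_def m_def add.commute)
qed

lemma sum_sqrt_bound:
  fixes x :: "'a \<Rightarrow> real"
  assumes I: "finite I" and x0: "\<And>i. i \<in> I \<Longrightarrow> 0 \<le> x i" and T: "(\<Sum>i\<in>I. x i) \<le> T"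
  shows "(\<Sum>i\<in>I. sqrt (x i)) \<le> sqrt (real (card I) * T)"
proof (cases "I = {} \<or> T \<le> 0")
  case True
  show ?thesis
  proof (cases "I = {}")
    case True then show ?thesis by simp
  next
    case False
    then have T0: "T \<le> 0" using True by simp
    have "(\<Sum>i\<in>I. x i) = 0" using T T0 x0 sum_nonneg[of I x] by force
    then have "\<forall>i\<in>I. x i = 0" using I x0 sum_nonneg_eq_0_iff by blast
    moreover have "T = 0" using T T0 x0 sum_nonneg[of I x] by force
    ultimately show ?thesis by simp
  qed
next
  case False
  then have Ine: "I \<noteq> {}" and Tp: "0 < T" by auto
  define m where "m = real (card I)"
  have mp: "0 < m" using Ine I by (simp add: m_def card_gt_0_iff)
  define a where "a = sqrt (T / m)"
  have ap: "0 < a" using Tp mp by (simp add: a_def)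
  have pt: "sqrt (x i) \<le> (x i / a + a) / 2" if i: "i \<in> I" for i
  proof -
    have "0 \<le> (sqrt (x i) - a)\<^sup>2" by simp
    then have "2 * a * sqrt (x i) \<le> x i + a\<^sup>2"
      using x0[OF i] by (simp add: power2_eq_square algebra_simps)
    then show ?thesis using ap by (simp add: field_simps power2_eq_square)
  qed
  have "(\<Sum>i\<in>I. sqrt (x i)) \<le> (\<Sum>i\<in>I. (x i / a + a) / 2)" using pt by (intro sum_mono)
  also have "\<dots> = ((\<Sum>i\<in>I. x i) / a + m * a) / 2"
    by (simp add: sum_divide_distrib[symmetric] sum.distrib m_def)
  also have "\<dots> \<le> (T / a + m * a) / 2" using T ap by (simp add: divide_right_mono)
  also have "T / a = sqrt (m * T)"
  proof -
    have "a * sqrt (m * T) = sqrt (T / m * (m * T))" unfolding a_def by (rule real_sqrt_mult[symmetric])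
    also have "T / m * (m * T) = T * T" using mp by simp
    also have "sqrt (T * T) = T" using Tp by simp
    finally show ?thesis using ap by (simp add: field_simps)
  qed
  also have "m * a = sqrt (m * T)"
  proof -
    have "sqrt (m * m) = m" using mp by simp
    then have "m * a = sqrt (m * m) * sqrt (T / m)" by (simp add: a_def)
    also have "\<dots> = sqrt (m * m * (T / m))" by (rule real_sqrt_mult[symmetric])
    also have "m * m * (T / m) = m * T" using mp by simp
    finally show ?thesis .
  qed
  finally show ?thesis by (simp add: m_def)
qed

lemma Gl_cnt:
  assumes "\<And>s z. \<not> (s < S \<and> z < Z) \<Longrightarrow> f s z = 0"
  shows "sum_list (map (\<lambda>(s, a, z, y). f s z) E) = (\<Sum>s<S. \<Sum>z<Z. real (cnt_sz E s z) * f s z)"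
proof (induction E)
  case Nil then show ?case by (simp add: cnt_sz_def)
next
  case (Cons t E)
  obtain s' a' z' y' where t: "t = (s', a', z', y')" by (cases t) auto
  have "(\<Sum>s<S. \<Sum>z<Z. real (cnt_sz (t # E) s z) * f s z) =
      (\<Sum>s<S. \<Sum>z<Z. (if s = s' \<and> z = z' then f s z else 0) + real (cnt_sz E s z) * f s z)"
    by (intro sum.cong refl) (auto simp: t cnt_sz_def algebra_simps)
  also have "\<dots> = (\<Sum>s<S. \<Sum>z<Z. (if s = s' \<and> z = z' then f s z else 0)) + (\<Sum>s<S. \<Sum>z<Z. real (cnt_sz E s z) * f s z)"
    by (simp add: sum.distrib)
  also have "(\<Sum>s<S. \<Sum>z<Z. (if s = s' \<and> z = z' then f s z else 0)) = f s' z'"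
  proof (cases "s' < S \<and> z' < Z")
    case True
    have "(\<Sum>s<S. \<Sum>z<Z. (if s = s' \<and> z = z' then f s z else 0)) = (\<Sum>s<S. if s = s' then f s z' else 0)"
      using True by (intro sum.cong refl) (auto simp: sum.delta')
    also have "\<dots> = f s' z'" using True by (simp add: sum.delta')
    finally show ?thesis .
  next
    case False
    have "(\<Sum>s<S. \<Sum>z<Z. (if s = s' \<and> z = z' then f s z else 0)) = 0"
      using False by (intro sum.neutral ballI) (auto simp: sum.delta')
    then show ?thesis using assms False by simp
  qed
  finally show ?case using Cons by (simp add: t)
qed

lemma sum_cnt_le_length: "(\<Sum>s<S. \<Sum>z<Z. cnt_sz E s z) \<le> length E"
proof (induction E)
  case Nil then show ?case by (simp add: cnt_sz_def)
next
  case (Cons t E)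
  obtain s' a' z' y' where t: "t = (s', a', z', y')" by (cases t) auto
  have "(\<Sum>s<S. \<Sum>z<Z. cnt_sz (t # E) s z) = (\<Sum>s<S. \<Sum>z<Z. (if s = s' \<and> z = z' then 1 else 0) + cnt_sz E s z)"
    by (intro sum.cong refl) (auto simp: t cnt_sz_def)
  also have "\<dots> = (\<Sum>s<S. \<Sum>z<Z. (if s = s' \<and> z = z' then 1 else 0)) + (\<Sum>s<S. \<Sum>z<Z. cnt_sz E s z)"
    by (simp add: sum.distrib)
  also have "(\<Sum>s<S. \<Sum>z<Z. (if s = s' \<and> z = z' then 1 else 0::nat)) \<le> 1"
  proof -
    have "(\<Sum>s<S. \<Sum>z<Z. (if s = s' \<and> z = z' then 1 else 0::nat)) = (\<Sum>s<S. if s = s' \<and> z' < Z then 1 else 0)"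
      by (intro sum.cong refl) (auto simp: sum.delta')
    also have "\<dots> \<le> 1" by (cases "z' < Z") (simp_all add: sum.delta sum.delta')
    finally show ?thesis .
  qed
  finally show ?case using Cons by (simp add: t)
qed

lemma cnt_take_sum: "cnt_sz (take (k * H) D) s z = (\<Sum>i<k. cnt_sz (take H (drop (i * H) D)) s z)"
proof (induction k)
  case 0 then show ?case by (simp add: cnt_sz_def)
next
  case (Suc k)
  have "Suc k * H = k * H + H" by simp
  then have "take (Suc k * H) D = take (k * H) D @ take H (drop (k * H) D)"
    by (simp only: take_add)
  then show ?case using Suc by (simp add: cnt_sz_append)
qed

lemma cnt_take_le: "cnt_sz (take H E) s z \<le> H"
  using cnt_sz_le_length[of "take H E" s z] by simp


lemma exp_chord:
  fixes x :: real
  assumes "0 \<le> x" "x \<le> 1"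
  shows "exp (- x) \<le> 1 - (1 - exp (-1)) * x"
proof -
  have "exp (1 * ((1 - x) *\<^sub>R 0 + x *\<^sub>R (-1))) \<le> (1 - x) * exp (1 * 0) + x * exp (1 * (-1::real))"
    using convex_onD[OF convex_on_exp[of 1], of x 0 "-1"] assms by auto
  then show ?thesis by (simp add: algebra_simps)
qed

lemma chern_step:
  fixes G :: "'a \<Rightarrow> real"
  assumes m: "0 < m" and G: "\<And>E. E \<in> set_pmf Q \<Longrightarrow> 0 \<le> G E \<and> G E \<le> m"
    and mu: "(\<integral>\<^sup>+E. ennreal (G E) \<partial>measure_pmf Q) = ennreal \<mu>" and mu0: "0 \<le> \<mu>"
  shows "(\<integral>\<^sup>+E. ennreal (exp (- (G E / m))) \<partial>measure_pmf Q) \<le> ennreal (exp (- ((1 - exp (-1)) * \<mu> / m)))"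
proof -
  define c where "c = 1 - exp (-1::real)"
  have c0: "0 \<le> c" unfolding c_def by simp
  define I where "I = (\<integral>\<^sup>+E. ennreal (exp (- (G E / m))) \<partial>measure_pmf Q)"
  have "I + ennreal (c / m) * ennreal \<mu> =
      (\<integral>\<^sup>+E. ennreal (exp (- (G E / m))) + ennreal (c / m) * ennreal (G E) \<partial>measure_pmf Q)"
    unfolding I_def mu[symmetric] by (subst nn_integral_add) (auto simp: nn_integral_cmult)
  also have "\<dots> \<le> (\<integral>\<^sup>+E. 1 \<partial>measure_pmf Q)"
  proof (intro nn_integral_mono_AE, unfold AE_measure_pmf_iff, intro ballI)
    fix E assume E: "E \<in> set_pmf Q"
    have x: "0 \<le> G E / m" "G E / m \<le> 1" using G[OF E] m by auto
    have "exp (- (G E / m)) + c / m * G E \<le> 1"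
    proof -
      have "(1 - exp (-1)) * (G E / m) = c / m * G E" by (simp add: c_def)
      then show ?thesis using exp_chord[OF x] by linarith
    qed
    then have "ennreal (exp (- (G E / m)) + c / m * G E) \<le> 1" by (simp add: ennreal_le_1)
    then show "ennreal (exp (- (G E / m))) + ennreal (c / m) * ennreal (G E) \<le> 1"
      using G[OF E] m c0 by (simp add: ennreal_mult[symmetric])
  qed
  also have "\<dots> = 1" by (simp add: measure_pmf.emeasure_space_1)
  finally have le0: "I + ennreal (c / m) * ennreal \<mu> \<le> 1" .
  have em: "ennreal (c / m) * ennreal \<mu> = ennreal (c / m * \<mu>)"
    by (rule ennreal_mult[symmetric]) (use m c0 mu0 in auto)
  have le1: "I + ennreal (c / m * \<mu>) \<le> 1" using le0 unfolding em .
  have "I \<le> I + ennreal (c / m * \<mu>)" by (rule add_increasing2) auto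
  then have I1: "I \<le> 1" using le1 by (rule order_trans)
  have "I \<noteq> top"
  proof
    assume "I = top"
    with I1 have "(1::ennreal) = top" by (simp add: top_unique)
    then show False by simp
  qed
  then obtain r where r: "I = ennreal r" "0 \<le> r" by (cases I rule: ennreal_cases) auto
  have ep: "ennreal r + ennreal (c / m * \<mu>) = ennreal (r + c / m * \<mu>)"
    by (rule ennreal_plus[symmetric]) (use r m c0 mu0 in auto)
  have "ennreal (r + c / m * \<mu>) \<le> 1" using le1 unfolding r(1) ep .
  then have "r + c / m * \<mu> \<le> 1" by (simp only: ennreal_le_1)
  then have "r \<le> 1 + (- (c * \<mu> / m))" by simp
  also have "\<dots> \<le> exp (- (c * \<mu> / m))" by (rule exp_ge_add_one_self[simplified add.commute])
  finally show ?thesis unfolding I_def[symmetric] r(1) c_def by simp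
qed

locale cmdp_alg = cmdp_run +
  fixes init :: "tup list \<Rightarrow> nat" and sel :: "(nat \<Rightarrow> real) \<Rightarrow> nat"
  assumes init_ok: "\<And>D. init D < S" and sel_ok: "\<And>f. sel f < nA \<and> (\<forall>a<nA. f a \<le> f (sel f))"
begin

definition "pol D = ucb_policy sel S nA Z Pz R H L D"
definition "Gl D E = sum_list (map (\<lambda>(s, a, z, y). gf S Z H L D s z) E)"
definition "mu D = Gex S Z P Pz (gf S Z H L D) (pol D) H 1 (init D)"
definition "cc = 1 - exp (-1::real)"
definition "Gk D i = Gl (take (i * H) D) (take H (drop (i * H) D))"
definition "Psi k D = ennreal (exp ((\<Sum>i<k. cc * mu (take (i * H) D) - Gk D i) / (real H)\<^sup>2))"

lemma gf_nonneg: "0 \<le> gf S Z H L D s z"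
  using bon_nonneg by (simp add: gf_def)

lemma gf_le: "gf S Z H L D s z \<le> real H"
  by (simp add: gf_def)

lemma Gl_bounds: "0 \<le> Gl D E \<and> Gl D E \<le> real H * real (length E)"
  unfolding Gl_def
proof (induction E)
  case Nil then show ?case by simp
next
  case (Cons t E)
  obtain s a z y where t: "t = (s, a, z, y)" by (cases t) auto
  show ?case using Cons gf_nonneg[of D s z] gf_le[of D s z] by (simp add: t algebra_simps)
qed

lemma pol_ok: "pol D s h < nA"
  unfolding pol_def using policy_in[OF sel_ok] by blast

lemma mu_nonneg: "0 \<le> mu D"
  unfolding mu_def by (rule Gex_nonneg) (rule gf_nonneg)

lemma mu_nn: "(\<integral>\<^sup>+E. ennreal (Gl D E) \<partial>measure_pmf (ep_steps P Pz (pol D) H 1 (init D))) = ennreal (mu D)"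
  unfolding Gl_def mu_def by (rule Gex_nn[OF pol_ok gf_nonneg init_ok])

lemma Psi_step:
  assumes D: "length D = k * H" and E: "length E = H"
  shows "Psi (Suc k) (D @ E) = Psi k D * ennreal (exp ((cc * mu D - Gl D E) / (real H)\<^sup>2))"
proof -
  have tk: "take (i * H) (D @ E) = take (i * H) D" if "i \<le> k" for i
    using that D by (simp add: mult_le_mono1)
  have dk: "take H (drop (i * H) (D @ E)) = take H (drop (i * H) D)" if "i < k" for i
  proof -
    have "i * H \<le> k * H" using that by (simp add: mult_le_mono1)
    moreover have "H \<le> k * H - i * H"
    proof -
      have "Suc i * H \<le> k * H" using that by (intro mult_le_mono1) simp
      then show ?thesis by simp
    qed
    ultimately show ?thesis using D by simp
  qed
  have Gk_eq: "Gk (D @ E) i = Gk D i" if "i < k" for i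
  proof -
    have a: "take (i * H) (D @ E) = take (i * H) D" using tk[of i] that by simp
    have b: "take H (drop (i * H) (D @ E)) = take H (drop (i * H) D)" using dk[of i] that by simp
    show ?thesis unfolding Gk_def a b ..
  qed
  have Gk_last: "Gk (D @ E) k = Gl D E"
    unfolding Gk_def using D E by simp
  have mu_eq: "mu (take (i * H) (D @ E)) = mu (take (i * H) D)" if "i < k" for i
  proof -
    have a: "take (i * H) (D @ E) = take (i * H) D" using tk[of i] that by simp
    show ?thesis unfolding a ..
  qed
  have tkk: "take (k * H) (D @ E) = D" using D by simp
  have s1: "(\<Sum>i<Suc k. cc * mu (take (i * H) (D @ E)) - Gk (D @ E) i) =
      (\<Sum>i<k. cc * mu (take (i * H) (D @ E)) - Gk (D @ E) i) + (cc * mu (take (k * H) (D @ E)) - Gk (D @ E) k)"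
    by (rule sum.lessThan_Suc)
  have s2: "(\<Sum>i<k. cc * mu (take (i * H) (D @ E)) - Gk (D @ E) i) = (\<Sum>i<k. cc * mu (take (i * H) D) - Gk D i)"
    by (rule sum.cong) (simp_all only: lessThan_iff Gk_eq mu_eq)
  have s3: "cc * mu (take (k * H) (D @ E)) - Gk (D @ E) k = cc * mu D - Gl D E"
    by (simp only: tkk Gk_last)
  have "(\<Sum>i<Suc k. cc * mu (take (i * H) (D @ E)) - Gk (D @ E) i) =
      (\<Sum>i<k. cc * mu (take (i * H) D) - Gk D i) + (cc * mu D - Gl D E)"
    unfolding s1 s2 s3 ..
  then have "exp ((\<Sum>i<Suc k. cc * mu (take (i * H) (D @ E)) - Gk (D @ E) i) / (real H)\<^sup>2) =
     exp ((\<Sum>i<k. cc * mu (take (i * H) D) - Gk D i) / (real H)\<^sup>2) * exp ((cc * mu D - Gl D E) / (real H)\<^sup>2)"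
    by (simp only: add_divide_distrib exp_add)
  then show ?thesis
    unfolding Psi_def by (simp add: ennreal_mult)
qed

lemma Psi_run: "(\<integral>\<^sup>+D. Psi K D \<partial>measure_pmf (cucbvi_run S nA Z P Pz R H L init sel K)) \<le> 1"
proof -
  have "(\<integral>\<^sup>+D. Psi K D \<partial>measure_pmf (cucbvi_run S nA Z P Pz R H L init sel K)) \<le> Psi 0 []"
  proof (rule run_super)
    fix k :: nat and D :: "tup list" assume D: "length D = k * H"
    let ?Q = "ep_steps P Pz (ucb_policy sel S nA Z Pz R H L D) H 1 (init D)"
    have Hp: "0 < (real H)\<^sup>2" using H1 by simp
    have "(\<integral>\<^sup>+E. Psi (Suc k) (D @ E) \<partial>measure_pmf ?Q) =
        (\<integral>\<^sup>+E. (Psi k D * ennreal (exp (cc * mu D / (real H)\<^sup>2))) * ennreal (exp (- (Gl D E / (real H)\<^sup>2))) \<partial>measure_pmf ?Q)"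
    proof (intro nn_integral_cong_AE, unfold AE_measure_pmf_iff, intro ballI)
      fix E assume "E \<in> set_pmf ?Q"
      then have E: "length E = H" by (rule ep_len)
      have "(cc * mu D - Gl D E) / (real H)\<^sup>2 = cc * mu D / (real H)\<^sup>2 + - (Gl D E / (real H)\<^sup>2)"
        by (simp add: diff_divide_distrib)
      then have "exp ((cc * mu D - Gl D E) / (real H)\<^sup>2) = exp (cc * mu D / (real H)\<^sup>2) * exp (- (Gl D E / (real H)\<^sup>2))"
        by (simp only: exp_add)
      then show "Psi (Suc k) (D @ E) = (Psi k D * ennreal (exp (cc * mu D / (real H)\<^sup>2))) * ennreal (exp (- (Gl D E / (real H)\<^sup>2)))"
        using Psi_step[OF D E] by (simp add: ennreal_mult mult.assoc)
    qed
    also have "\<dots> = (Psi k D * ennreal (exp (cc * mu D / (real H)\<^sup>2))) * (\<integral>\<^sup>+E. ennreal (exp (- (Gl D E / (real H)\<^sup>2))) \<partial>measure_pmf ?Q)"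
      by (rule nn_integral_cmult) simp
    also have "\<dots> \<le> (Psi k D * ennreal (exp (cc * mu D / (real H)\<^sup>2))) * ennreal (exp (- ((1 - exp (-1)) * mu D / (real H)\<^sup>2)))"
    proof (intro mult_left_mono chern_step[OF Hp])
      fix E assume "E \<in> set_pmf ?Q"
      then have E: "length E = H" by (rule ep_len)
      show "0 \<le> Gl D E \<and> Gl D E \<le> (real H)\<^sup>2" using Gl_bounds[of D E] E by (simp add: power2_eq_square)
    next
      show "(\<integral>\<^sup>+E. ennreal (Gl D E) \<partial>measure_pmf ?Q) = ennreal (mu D)" using mu_nn[of D] by (simp add: pol_def)
    qed (auto simp: mu_nonneg)
    also have "\<dots> = Psi k D * ennreal (exp (cc * mu D / (real H)\<^sup>2) * exp (- ((1 - exp (-1)) * mu D / (real H)\<^sup>2)))"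
      by (simp add: ennreal_mult mult.assoc)
    also have "exp (cc * mu D / (real H)\<^sup>2) * exp (- ((1 - exp (-1)) * mu D / (real H)\<^sup>2)) = 1"
      unfolding cc_def by (subst exp_add[symmetric]) simp
    finally show "(\<integral>\<^sup>+E. Psi (Suc k) (D @ E) \<partial>measure_pmf ?Q) \<le> Psi k D" by simp
  qed
  also have "Psi 0 [] = 1" by (simp add: Psi_def)
  finally show ?thesis .
qed

lemma prob_chern:
  "measure_pmf.prob (cucbvi_run S nA Z P Pz R H L init sel K) {D. ennreal (2 / \<delta>) \<le> Psi K D} \<le> \<delta> / 2"
  using pmf_markov[OF Psi_run, of "2 / \<delta>"] d0 by simp

lemma chern_good:
  assumes "\<not> ennreal (2 / \<delta>) \<le> Psi K D"
  shows "cc * (\<Sum>k<K. mu (take (k * H) D)) \<le> (\<Sum>k<K. Gk D k) + (real H)\<^sup>2 * ln (2 / \<delta>)"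
proof -
  define x where "x = (\<Sum>i<K. cc * mu (take (i * H) D) - Gk D i) / (real H)\<^sup>2"
  have "\<not> (2 / \<delta> \<le> exp x)"
  proof
    assume "2 / \<delta> \<le> exp x"
    then have "ennreal (2 / \<delta>) \<le> ennreal (exp x)" by (rule ennreal_leI)
    with assms show False by (simp add: Psi_def x_def)
  qed
  then have "exp x < 2 / \<delta>" by simp
  then have "ln (exp x) < ln (2 / \<delta>)" using d0 by (subst ln_less_cancel_iff) auto
  then have "x < ln (2 / \<delta>)" by simp
  then have "(\<Sum>i<K. cc * mu (take (i * H) D) - Gk D i) < (real H)\<^sup>2 * ln (2 / \<delta>)"
    using H1 unfolding x_def by (simp add: divide_less_eq mult.commute)
  then show ?thesis by (simp add: sum_subtractf sum_distrib_left)
qed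

end


lemma conf_L_ge1:
  assumes "1 \<le> S" "1 \<le> H" "1 \<le> K" "1 \<le> Z" "0 < \<delta>" "\<delta> < 1"
  shows "1 \<le> conf_L S Z H K \<delta>"
proof -
  have n1: "(1::nat) \<le> S * H * K * Z * (K * H)" using assms by simp
  then have "(1::real) \<le> real (S * H * K * Z * (K * H))" using of_nat_mono[OF n1] by simp
  then have "5 \<le> 5 * real S * real H * real K * real Z * (real K * real H)"
    by (simp add: mult_ac)
  also have "\<dots> \<le> 5 * real S * real H * real K * real Z * (real K * real H) / \<delta>"
  proof -
    let ?x = "5 * real S * real H * real K * real Z * (real K * real H)"
    have "?x * \<delta> \<le> ?x * 1" using assms \<open>5 \<le> ?x\<close> by (intro mult_left_mono) auto
    then show ?thesis using assms by (simp add: le_divide_eq)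
  qed
  finally have X: "5 \<le> 5 * real S * real H * real K * real Z * (real K * real H) / \<delta>" .
  have "(1::real) = ln (exp 1)" by simp
  also have "\<dots> \<le> ln 5" using exp_le by (subst ln_le_cancel_iff) auto
  also have "\<dots> \<le> conf_L S Z H K \<delta>" unfolding conf_L_def using X by (subst ln_le_cancel_iff) auto
  finally show ?thesis .
qed

context cmdp_alg begin

lemma gf_gs:
  assumes s: "s < S" and z: "z < Z"
  shows "gf S Z H L D s z = (if cnt_sz D s z = 0 then real H
      else min (real H) (14 * real H * L * sqrt (real S) / sqrt (real (cnt_sz D s z))))"
proof -
  have "2 * bon S H L D s z = 14 * real H * L * sqrt (real S) / sqrt (real (cnt_sz D s z))"
    by (simp add: bon_def real_sqrt_divide)
  then show ?thesis using s z by (simp add: gf_def)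
qed

lemma pigeon:
  "(\<Sum>k<K. Gk D k) \<le> 2 * (real H)\<^sup>2 * real S * real Z + 42 * real H * L * real S * sqrt (real Z * (real K * real H))"
proof -
  define n where "n = (\<lambda>s z i. cnt_sz (take H (drop (i * H) D)) s z)"
  define cg where "cg = 14 * real H * L * sqrt (real S)"
  have cg0: "0 \<le> cg" unfolding cg_def using L0 by simp
  define gs where "gs = (\<lambda>N::nat. (if N = 0 then real H else min (real H) (cg / sqrt (real N))))"
  define NK where "NK = (\<lambda>s z. cnt_sz (take (K * H) D) s z)"
  have Gk_eq: "Gk D k = (\<Sum>s<S. \<Sum>z<Z. real (n s z k) * gs (\<Sum>i<k. n s z i))" for k
  proof -
    have "Gk D k = (\<Sum>s<S. \<Sum>z<Z. real (n s z k) * gf S Z H L (take (k * H) D) s z)"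
      unfolding Gk_def Gl_def n_def by (rule Gl_cnt) (auto simp: gf_def)
    also have "\<dots> = (\<Sum>s<S. \<Sum>z<Z. real (n s z k) * gs (\<Sum>i<k. n s z i))"
      by (intro sum.cong refl) (simp add: gf_gs gs_def cg_def n_def cnt_take_sum[symmetric])
    finally show ?thesis .
  qed
  have per: "(\<Sum>k<K. real (n s z k) * gs (\<Sum>i<k. n s z i)) \<le> 2 * (real H)\<^sup>2 + 3 * cg * sqrt (real (NK s z))" for s z
  proof -
    have "(\<Sum>k<K. real (n s z k) * gs (\<Sum>i<k. n s z i)) \<le>
       real H * real (min (\<Sum>i<K. n s z i) (2 * H)) + 3 * cg * sqrt (real (\<Sum>i<K. n s z i))"
      unfolding gs_def by (rule seq_bound) (auto simp: n_def cnt_take_le cg0)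
    also have "(\<Sum>i<K. n s z i) = NK s z" unfolding NK_def n_def by (rule cnt_take_sum[symmetric])
    also have "real H * real (min (NK s z) (2 * H)) \<le> real H * real (2 * H)"
      by (intro mult_left_mono) auto
    also have "real H * real (2 * H) = 2 * (real H)\<^sup>2" by (simp add: power2_eq_square)
    finally show ?thesis by simp
  qed
  have "(\<Sum>k<K. Gk D k) = (\<Sum>s<S. \<Sum>z<Z. \<Sum>k<K. real (n s z k) * gs (\<Sum>i<k. n s z i))"
    unfolding Gk_eq by (subst sum.swap) (simp add: sum.swap[of _ "{..<K}"])
  also have "\<dots> \<le> (\<Sum>s<S. \<Sum>z<Z. 2 * (real H)\<^sup>2 + 3 * cg * sqrt (real (NK s z)))"
    by (intro sum_mono per)
  also have "\<dots> = 2 * (real H)\<^sup>2 * real S * real Z + 3 * cg * (\<Sum>s<S. \<Sum>z<Z. sqrt (real (NK s z)))"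
    by (simp add: sum.distrib sum_distrib_left)
  also have "(\<Sum>s<S. \<Sum>z<Z. sqrt (real (NK s z))) \<le> sqrt (real S * real Z * (real K * real H))"
  proof -
    have "(\<Sum>s<S. \<Sum>z<Z. sqrt (real (NK s z))) = (\<Sum>p\<in>{..<S} \<times> {..<Z}. sqrt (real (NK (fst p) (snd p))))"
      by (simp add: sum.cartesian_product case_prod_beta)
    also have "\<dots> \<le> sqrt (real (card ({..<S} \<times> {..<Z})) * (real K * real H))"
    proof (rule sum_sqrt_bound)
      have "(\<Sum>p\<in>{..<S} \<times> {..<Z}. real (NK (fst p) (snd p))) = real (\<Sum>s<S. \<Sum>z<Z. NK s z)"
        by (simp add: sum.cartesian_product case_prod_beta)
      also have "(\<Sum>s<S. \<Sum>z<Z. NK s z) \<le> length (take (K * H) D)"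
        unfolding NK_def by (rule sum_cnt_le_length)
      also have "length (take (K * H) D) \<le> K * H" by simp
      finally show "(\<Sum>p\<in>{..<S} \<times> {..<Z}. real (NK (fst p) (snd p))) \<le> real K * real H"
        by simp
    qed auto
    finally show ?thesis by (simp add: card_cartesian_product)
  qed
  also have "3 * cg * sqrt (real S * real Z * (real K * real H)) = 42 * real H * L * real S * sqrt (real Z * (real K * real H))"
  proof -
    have "sqrt (real S) * sqrt (real S * real Z * (real K * real H)) = real S * sqrt (real Z * (real K * real H))"
      by (simp add: real_sqrt_mult mult.assoc[symmetric])
    then show ?thesis unfolding cg_def by (simp add: mult_ac)
  qed
  finally show ?thesis using cg0 by (simp add: mult_left_mono)
qed


lemma regret_det:
  assumes c: "\<forall>k<K. conc (take (k * H) D)" and ch: "\<not> ennreal (2 / \<delta>) \<le> Psi K D"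
  shows "regret S nA Z P Pz R H K L init sel D \<le>
     100 * real H * real S * sqrt (real Z * (real K * real H)) * L ^ 2 + 100 * (real H * real S * real Z * L) ^ 2"
proof -
  have r1: "regret S nA Z P Pz R H K L init sel D \<le> (\<Sum>k<K. mu (take (k * H) D))"
    unfolding regret_def
  proof (intro sum_mono)
    fix k assume "k \<in> {..<K}"
    then have ck: "conc (take (k * H) D)" using c by auto
    show "V_star S nA Z P Pz R H 1 (init (take (k * H) D)) -
         V_pi S Z P Pz R H (ucb_policy sel S nA Z Pz R H L (take (k * H) D)) 1 (init (take (k * H) D))
         \<le> mu (take (k * H) D)"
      unfolding mu_def pol_def by (rule episode_regret[OF ck sel_ok init_ok])
  qed
  have cc2: "1 / 2 \<le> cc"
  proof -
    have "2 \<le> exp (1::real)" using exp_ge_add_one_self[of 1] by simp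
    then have "exp (-1::real) \<le> 1 / 2" by (simp add: exp_minus field_simps)
    then show ?thesis unfolding cc_def by simp
  qed
  have mu0: "0 \<le> (\<Sum>k<K. mu (take (k * H) D))" by (intro sum_nonneg mu_nonneg)
  have lnd: "ln (2 / \<delta>) \<le> L"
  proof -
    have "2 \<le> 5 * real S * real H * real K * real Z * (real K * real H)"
    proof -
      have n1: "(1::nat) \<le> S * H * K * Z * (K * H)" using S1 H1 K1 Z1 by simp
      then have "(1::real) \<le> real (S * H * K * Z * (K * H))" using of_nat_mono[OF n1] by simp
      then show ?thesis by (simp add: mult_ac)
    qed
    then have "2 / \<delta> \<le> 5 * real S * real H * real K * real Z * (real K * real H) / \<delta>"
      using d0 by (intro divide_right_mono) auto
    moreover have "0 < 5 * real S * real H * real K * real Z * (real K * real H) / \<delta>"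
      using S1 H1 K1 Z1 d0 by simp
    ultimately show ?thesis unfolding Ldef conf_L_def using d0 by (subst ln_le_cancel_iff) auto
  qed
  have "(1 / 2) * (\<Sum>k<K. mu (take (k * H) D)) \<le> cc * (\<Sum>k<K. mu (take (k * H) D))"
    using cc2 mu0 by (intro mult_right_mono) auto
  also have "\<dots> \<le> (\<Sum>k<K. Gk D k) + (real H)\<^sup>2 * ln (2 / \<delta>)" by (rule chern_good[OF ch])
  also have "\<dots> \<le> (2 * (real H)\<^sup>2 * real S * real Z + 42 * real H * L * real S * sqrt (real Z * (real K * real H)))
      + (real H)\<^sup>2 * L"
    using pigeon lnd by (intro add_mono mult_left_mono) auto
  finally have r2: "regret S nA Z P Pz R H K L init sel D \<le>
      4 * (real H)\<^sup>2 * real S * real Z + 84 * real H * L * real S * sqrt (real Z * (real K * real H)) + 2 * (real H)\<^sup>2 * L"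
    using r1 by simp
  define X where "X = (real H * real S * real Z * L) ^ 2"
  have L1: "1 \<le> L" by (rule L_ge1)
  have LL: "L \<le> L ^ 2" using L1 by (simp add: power2_eq_square)
  have "(1::nat) \<le> S * Z" using S1 Z1 by simp
  then have SZ1: "1 \<le> real S * real Z" using of_nat_mono[of 1 "S * Z"] by simp
  have b1: "(real H)\<^sup>2 * real S * real Z \<le> X"
  proof -
    have L2: "1 \<le> L ^ 2" using one_le_power[OF L1] .
    have "1 * 1 \<le> real S * real Z * L ^ 2" by (rule mult_mono[OF SZ1 L2]) auto
    then have "1 \<le> real S * real Z * L ^ 2" by simp
    then have "(real H)\<^sup>2 * real S * real Z * 1 \<le> (real H)\<^sup>2 * real S * real Z * (real S * real Z * L ^ 2)"
      by (intro mult_left_mono) auto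
    then show ?thesis unfolding X_def by (simp add: power_mult_distrib mult_ac power2_eq_square)
  qed
  have b2: "(real H)\<^sup>2 * L \<le> X"
  proof -
    have "1 \<le> (real S * real Z) ^ 2" using one_le_power[OF SZ1] .
    then have "(real H)\<^sup>2 * L ^ 2 * 1 \<le> (real H)\<^sup>2 * L ^ 2 * (real S * real Z) ^ 2"
      by (intro mult_left_mono) auto
    moreover have "(real H)\<^sup>2 * L \<le> (real H)\<^sup>2 * L ^ 2" using LL by (intro mult_left_mono) auto
    ultimately show ?thesis unfolding X_def by (simp add: power_mult_distrib mult_ac)
  qed
  have b3: "84 * real H * L * real S * sqrt (real Z * (real K * real H)) \<le>
      100 * real H * real S * sqrt (real Z * (real K * real H)) * L ^ 2"
  proof -
    have "84 * L \<le> 100 * L ^ 2" using LL L1 by simp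
    then have "(real H * real S * sqrt (real Z * (real K * real H))) * (84 * L) \<le>
        (real H * real S * sqrt (real Z * (real K * real H))) * (100 * L ^ 2)"
      by (intro mult_left_mono) auto
    then show ?thesis by (simp add: mult_ac)
  qed
  have e1: "4 * (real H)\<^sup>2 * real S * real Z = 4 * ((real H)\<^sup>2 * real S * real Z)" by (simp add: mult.assoc)
  have e2: "2 * (real H)\<^sup>2 * L = 2 * ((real H)\<^sup>2 * L)" by (simp add: mult.assoc)
  have X0: "0 \<le> X" unfolding X_def by simp
  show ?thesis using r2 b1 b2 b3 X0 unfolding X_def e1 e2 by linarith
qed

lemma main_prob:
  "measure_pmf.prob (cucbvi_run S nA Z P Pz R H L init sel K)
     {D. regret S nA Z P Pz R H K L init sel D \<le>
       100 * real H * real S * sqrt (real Z * (real K * real H)) * L ^ 2 + 100 * (real H * real S * real Z * L) ^ 2}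
   \<ge> 1 - \<delta>"
proof -
  let ?M = "cucbvi_run S nA Z P Pz R H L init sel K"
  let ?A = "{D. \<exists>k<K. \<not> conc (take (k * H) D)}"
  let ?B = "{D. ennreal (2 / \<delta>) \<le> Psi K D}"
  let ?G = "{D. regret S nA Z P Pz R H K L init sel D \<le>
       100 * real H * real S * sqrt (real Z * (real K * real H)) * L ^ 2 + 100 * (real H * real S * real Z * L) ^ 2}"
  have sub: "UNIV - (?A \<union> ?B) \<subseteq> ?G" using regret_det by auto
  have "measure_pmf.prob ?M (?A \<union> ?B) \<le> measure_pmf.prob ?M ?A + measure_pmf.prob ?M ?B"
    by (rule measure_Un_le) auto
  also have "\<dots> \<le> \<delta> / 2 + \<delta> / 2" using prob_notgood prob_chern by (intro add_mono)
  finally have ab: "measure_pmf.prob ?M (?A \<union> ?B) \<le> \<delta>" by simp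
  have "1 - \<delta> \<le> 1 - measure_pmf.prob ?M (?A \<union> ?B)" using ab by simp
  also have "\<dots> = measure_pmf.prob ?M (UNIV - (?A \<union> ?B))"
    using measure_pmf.prob_compl[of "?A \<union> ?B" ?M] by simp
  also have "\<dots> \<le> measure_pmf.prob ?M ?G"
    using sub by (intro measure_pmf.finite_measure_mono) auto
  finally show ?thesis .
qed

end

theorem theorem1:
  shows "\<exists>(C::real) (p::nat). \<forall>(S::nat) (nA::nat) (Z::nat) (H::nat) (K::nat) (\<delta>::real)
     (P::nat \<Rightarrow> nat \<Rightarrow> nat pmf) (Pz::nat \<Rightarrow> nat \<Rightarrow> nat pmf) (R::nat \<Rightarrow> nat \<Rightarrow> real)
     (init::tup list \<Rightarrow> nat) (sel::(nat \<Rightarrow> real) \<Rightarrow> nat).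
     1 \<le> S \<and> 1 \<le> nA \<and> 1 \<le> Z \<and> 1 \<le> H \<and> 1 \<le> K \<and> 0 < \<delta> \<and>
     (\<forall>s<S. \<forall>z<Z. set_pmf (P s z) \<subseteq> {..<S}) \<and>
     (\<forall>s<S. \<forall>a<nA. set_pmf (Pz s a) \<subseteq> {..<Z}) \<and>
     (\<forall>s<S. \<forall>z<Z. 0 \<le> R s z \<and> R s z \<le> 1) \<and>
     (\<forall>D. init D < S) \<and>
     (\<forall>f. sel f < nA \<and> (\<forall>a<nA. f a \<le> f (sel f)))
     \<longrightarrow>
     (let L = conf_L S Z H K \<delta>; T = real K * real H in
      measure_pmf.prob (cucbvi_run S nA Z P Pz R H L init sel K)
        {D. regret S nA Z P Pz R H K L init sel D
            \<le> C * real H * real S * sqrt (real Z * T) * L ^ p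
              + C * (real H * real S * real Z * L) ^ p}
      \<ge> 1 - \<delta>)"
proof (intro exI allI impI)
  fix S nA Z H K :: nat and \<delta> :: real and P Pz :: "nat \<Rightarrow> nat \<Rightarrow> nat pmf" and R :: "nat \<Rightarrow> nat \<Rightarrow> real"
    and init :: "tup list \<Rightarrow> nat" and sel :: "(nat \<Rightarrow> real) \<Rightarrow> nat"
  assume h: "1 \<le> S \<and> 1 \<le> nA \<and> 1 \<le> Z \<and> 1 \<le> H \<and> 1 \<le> K \<and> 0 < \<delta> \<and>
     (\<forall>s<S. \<forall>z<Z. set_pmf (P s z) \<subseteq> {..<S}) \<and>
     (\<forall>s<S. \<forall>a<nA. set_pmf (Pz s a) \<subseteq> {..<Z}) \<and>
     (\<forall>s<S. \<forall>z<Z. 0 \<le> R s z \<and> R s z \<le> 1) \<and>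
     (\<forall>D. init D < S) \<and>
     (\<forall>f. sel f < nA \<and> (\<forall>a<nA. f a \<le> f (sel f)))"
  show "let L = conf_L S Z H K \<delta>; T = real K * real H in
      measure_pmf.prob (cucbvi_run S nA Z P Pz R H L init sel K)
        {D. regret S nA Z P Pz R H K L init sel D
            \<le> 100 * real H * real S * sqrt (real Z * T) * L ^ 2
              + 100 * (real H * real S * real Z * L) ^ 2}
      \<ge> 1 - \<delta>"
  proof (cases "\<delta> < 1")
    case False
    then show ?thesis unfolding Let_def
      by (intro order_trans[OF _ measure_nonneg]) simp
  next
    case True
    have L1: "1 \<le> conf_L S Z H K \<delta>" using conf_L_ge1 h True by auto
    interpret cmdp_alg S nA Z P Pz R H "conf_L S Z H K \<delta>" K \<delta> init sel
      by unfold_locales (use h True L1 in auto)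
    show ?thesis unfolding Let_def by (rule main_prob)
  qed
qed


end
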